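(* Let $\Phi:\mathcal{S}(\mathbb{C}^2)\to\mathcal{S}(\mathbb{C}^2)$ be a map such that $$d_{\mathrm{sym}}(\Phi(\rho),\Phi(\omega))=d_{\mathrm{sym}}(\rho,\omega)\qquad\text{for all }\rho,\omega\in\mathcal{S}(\mathbb{C}^2),$$ and such that $\Phi$ maps pure states to pure states, i.e. $\Phi(\mathcal{P}_1(\mathbb{C}^2))\subseteq\mathcal{P}_1(\mathbb{C}^2)$. Then there is an operator $U$ on $\mathbb{C}^2$ which is either unitary or anti-unitary such that $\Phi(\rho)=U\rho U^*$ for all $\rho\in\mathcal{S}(\mathbb{C}^2)$. Conversely, for every unitary or anti-unitary $U$ on $\mathbb{C}^2$, the map $\rho\mapsto U\rho U^*$ is a $d_{\mathrm{sym}}$-isometry of $\mathcal{S}(\mathbb{C}^2)$.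
   Context: Let $\mathcal{H}=\mathbb{C}^2$, $\mathcal{H}^*$ its dual space. $\mathcal{S}(\mathcal{H})$ is the set of density operators (positive semidefinite, trace one) on $\mathcal{H}$; $\mathcal{P}_1(\mathcal{H})$ is the set of pure states (rank-one orthogonal projections). For a linear operator $A$ on $\mathcal{H}$, its transpose $A^T$ is the operator on $\mathcal{H}^*$ defined by $(A^T\varphi)(x)=\varphi(Ax)$. For $\rho,\omega\in\mathcal{S}(\mathcal{H})$, the set of quantum couplings is $\mathcal{C}(\rho,\omega)=\{\Pi\in\mathcal{S}(\mathcal{H}\otimes\mathcal{H}^* ):\ \mathrm{tr}_{\mathcal{H}^*}[\Pi]=\omega,\ \mathrm{tr}_{\mathcal{H}}[\Pi]=\rho^T\}$. For a finite set $\mathcal{A}=\{A_1,\dots,A_N\}$ of self-adjoint operators, the cost operator is $C_{\mathcal{A}}=\sum_{j=1}^N(A_j\otimes I^T-I\otimes A_j^T)^2$, the quantum Wasserstein distance is given by $D_{\mathcal{A}}^2(\rho,\omega)=\inf\{\mathrm{tr}[\Pi C_{\mathcal{A}}]:\Pi\in\mathcal{C}(\rho,\omega)\}$, and the quantum Wasserstein divergence is $d_{\mathcal{A}}(\rho,\omega)=\big(D_{\mathcal{A}}^2(\rho,\omega)-\tfrac12(D_{\mathcal{A}}^2(\rho,\rho)+D_{\mathcal{A}}^2(\omega,\omega))\big)^{1/2}$. The Pauli matrices are $\sigma_1=\begin{bmatrix}0&1\\1&0\end{bmatrix}$, $\sigma_2=\begin{bmatrix}0&-i\\i&0\end{bmatrix}$,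 $\sigma_3=\begin{bmatrix}1&0\\0&-1\end{bmatrix}$. $D_{\mathrm{sym}}$ and $d_{\mathrm{sym}}$ denote $D_{\mathcal{A}}$ and $d_{\mathcal{A}}$ for $\mathcal{A}=\{\sigma_1,\sigma_2,\sigma_3\}$. *)

theory Defs
  imports "Jordan_Normal_Form.Matrix"
begin

text \<open>The dual space H* is identified with C^2 via the dual basis; then the transpose
 A^T of the context is the ordinary matrix transpose. Operators on H (x) H* are
 4x4 matrices with the Kronecker-product basis ordering: index 2*i+k <-> e_i (x) e_k^*.\<close>

definition adj :: "complex mat \<Rightarrow> complex mat" where
  "adj A = mat (dim_col A) (dim_row A) (\<lambda>(i,j). cnj (A $$ (j,i)))"

definition cconj :: "complex mat \<Rightarrow> complex mat" where
  "cconj A = mat (dim_row A) (dim_col A) (\<lambda>(i,j). cnj (A $$ (i,j)))"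

definition mtrace :: "complex mat \<Rightarrow> complex" where
  "mtrace A = (\<Sum>i<dim_row A. A $$ (i,i))"

definition psd :: "nat \<Rightarrow> complex mat \<Rightarrow> bool" where
  "psd n A \<longleftrightarrow> A \<in> carrier_mat n n \<and>
     (\<forall>v \<in> carrier_vec n. let q = (\<Sum>i<n. \<Sum>j<n. cnj (v $ i) * A $$ (i,j) * v $ j)
                            in Im q = 0 \<and> Re q \<ge> 0)"

definition density :: "nat \<Rightarrow> complex mat \<Rightarrow> bool" where
  "density n A \<longleftrightarrow> psd n A \<and> mtrace A = 1"

definition states2 :: "complex mat set" where
  "states2 = {A. density 2 A}"

definition pure2 :: "complex mat set" where
  "pure2 = {P. \<exists>\<psi> \<in> carrier_vec 2. (\<Sum>i<2. cmod (\<psi> $ i)^2) = 1 \<and>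
                 P = mat 2 2 (\<lambda>(i,j). \<psi> $ i * cnj (\<psi> $ j))}"

definition kron2 :: "complex mat \<Rightarrow> complex mat \<Rightarrow> complex mat" where
  "kron2 A B = mat 4 4 (\<lambda>(i,j). A $$ (i div 2, j div 2) * B $$ (i mod 2, j mod 2))"

definition ptr_dual :: "complex mat \<Rightarrow> complex mat" where
  "ptr_dual P = mat 2 2 (\<lambda>(i,j). \<Sum>k<2. P $$ (2*i+k, 2*j+k))"

definition ptr_H :: "complex mat \<Rightarrow> complex mat" where
  "ptr_H P = mat 2 2 (\<lambda>(k,l). \<Sum>i<2. P $$ (2*i+k, 2*i+l))"

definition couplings :: "complex mat \<Rightarrow> complex mat \<Rightarrow> complex mat set" where
  "couplings \<rho> \<omega> = {P. density 4 P \<and> ptr_dual P = \<omega> \<and> ptr_H P = transpose_mat \<rho>}"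

definition cost_op :: "complex mat list \<Rightarrow> complex mat" where
  "cost_op As = foldr (\<lambda>A C. (let M = kron2 A (1\<^sub>m 2) - kron2 (1\<^sub>m 2) (transpose_mat A)
                                   in M * M) + C) As (0\<^sub>m 4 4)"

definition sigma1 :: "complex mat" where
  "sigma1 = mat_of_rows_list 2 [[0, 1], [1, 0]]"
definition sigma2 :: "complex mat" where
  "sigma2 = mat_of_rows_list 2 [[0, -\<i>], [\<i>, 0]]"
definition sigma3 :: "complex mat" where
  "sigma3 = mat_of_rows_list 2 [[1, 0], [0, -1]]"

definition QW2 :: "complex mat list \<Rightarrow> complex mat \<Rightarrow> complex mat \<Rightarrow> real" where
  "QW2 As \<rho> \<omega> = Inf ((\<lambda>P. Re (mtrace (P * cost_op As))) ` couplings \<rho> \<omega>)"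

definition QWdiv :: "complex mat list \<Rightarrow> complex mat \<Rightarrow> complex mat \<Rightarrow> real" where
  "QWdiv As \<rho> \<omega> = sqrt (QW2 As \<rho> \<omega> - (QW2 As \<rho> \<rho> + QW2 As \<omega> \<omega>) / 2)"

definition d_sym :: "complex mat \<Rightarrow> complex mat \<Rightarrow> real" where
  "d_sym = QWdiv [sigma1, sigma2, sigma3]"

definition unitary2 :: "complex mat \<Rightarrow> bool" where
  "unitary2 U \<longleftrightarrow> U \<in> carrier_mat 2 2 \<and> U * adj U = 1\<^sub>m 2 \<and> adj U * U = 1\<^sub>m 2"

text \<open>Every anti-unitary U on C^2 is U = V K with V unitary and K the entrywise complex
 conjugation (and conversely); then U rho U^* = V (conj rho) V^*.\<close>
definition antiunitary_conj :: "complex mat \<Rightarrow> complex mat \<Rightarrow> complex mat" where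
  "antiunitary_conj V \<rho> = V * cconj \<rho> * adj V"

definition unitary_conj :: "complex mat \<Rightarrow> complex mat \<Rightarrow> complex mat" where
  "unitary_conj U \<rho> = U * \<rho> * adj U"

end

theory Submission
  imports Defs "Jordan_Normal_Form.Determinant"
begin


lemma sum4: "(\<Sum>i<(4::nat). f i) = f 0 + f 1 + f 2 + (f 3 :: 'a::comm_monoid_add)"
  by (simp add: eval_nat_numeral)
lemma sum2: "(\<Sum>i<(2::nat). f i) = f 0 + (f 1 :: 'a::comm_monoid_add)"
  by (simp add: eval_nat_numeral)
lemma sum4': "(\<Sum>i\<in>{0..<(4::nat)}. f i) = f 0 + f 1 + f 2 + (f 3 :: 'a::comm_monoid_add)"
  by (simp add: eval_nat_numeral atLeast0LessThan)
lemma sum2': "(\<Sum>i\<in>{0..<(2::nat)}. f i) = f 0 + (f 1 :: 'a::comm_monoid_add)"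
  by (simp add: eval_nat_numeral atLeast0LessThan)

lemma mat4_ext: "A \<in> carrier_mat 4 4 \<Longrightarrow> B \<in> carrier_mat 4 4 \<Longrightarrow>
  (\<forall>i\<in>{0,1,2,3::nat}. \<forall>j\<in>{0,1,2,3::nat}. A$$(i,j) = B$$(i,j)) \<Longrightarrow> A = B"
  apply (rule eq_matI) apply (auto simp: less_Suc_eq numeral_eq_Suc)
  done

lemma mat2_ext: "A \<in> carrier_mat 2 2 \<Longrightarrow> B \<in> carrier_mat 2 2 \<Longrightarrow>
  (\<forall>i\<in>{0,1::nat}. \<forall>j\<in>{0,1::nat}. A$$(i,j) = B$$(i,j)) \<Longrightarrow> A = B"
  apply (rule eq_matI) apply (auto simp: less_Suc_eq numeral_eq_Suc)
  done

lemma sig1: "sigma1 \<in> carrier_mat 2 2" "sigma1 $$ (0,0) = 0" "sigma1 $$ (0,Suc 0) = 1" "sigma1 $$ (Suc 0,0) = 1" "sigma1 $$ (Suc 0,Suc 0) = 0"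
  by (auto simp: sigma1_def mat_of_rows_list_def)
lemma sig2: "sigma2 \<in> carrier_mat 2 2" "sigma2 $$ (0,0) = 0" "sigma2 $$ (0,Suc 0) = -\<i>" "sigma2 $$ (Suc 0,0) = \<i>" "sigma2 $$ (Suc 0,Suc 0) = 0"
  by (auto simp: sigma2_def mat_of_rows_list_def)
lemma sig3: "sigma3 \<in> carrier_mat 2 2" "sigma3 $$ (0,0) = 1" "sigma3 $$ (0,Suc 0) = 0" "sigma3 $$ (Suc 0,0) = 0" "sigma3 $$ (Suc 0,Suc 0) = -1"
  by (auto simp: sigma3_def mat_of_rows_list_def)

lemma tr2: "A \<in> carrier_mat 2 2 \<Longrightarrow> i<2 \<Longrightarrow> j<2 \<Longrightarrow> transpose_mat A $$ (i,j) = A $$ (j,i)"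
  by auto
lemmas sigT = tr2[OF sig1(1)] tr2[OF sig2(1)] tr2[OF sig3(1)]

definition Cmat :: "complex mat" where
  "Cmat = mat 4 4 (\<lambda>(i,j). if i = j then (if i = 0 \<or> i = 3 then 4 else 8)
                           else if (i = 0 \<and> j = 3) \<or> (i = 3 \<and> j = 0) then -4 else 0)"

lemma Mj_carrier: "A \<in> carrier_mat 2 2 \<Longrightarrow> kron2 A (1\<^sub>m 2) - kron2 (1\<^sub>m 2) (transpose_mat A) \<in> carrier_mat 4 4"
  by (auto simp: kron2_def)

lemma cost_eq: "cost_op [sigma1, sigma2, sigma3] = Cmat"
proof -
  let ?M = "\<lambda>A. kron2 A (1\<^sub>m 2) - kron2 (1\<^sub>m 2) (transpose_mat A)"
  have e: "cost_op [sigma1, sigma2, sigma3] = ?M sigma1 * ?M sigma1 + (?M sigma2 * ?M sigma2 + (?M sigma3 * ?M sigma3 + 0\<^sub>m 4 4))"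
    by (simp add: cost_op_def Let_def)
  show ?thesis unfolding e
    apply (rule mat4_ext)
    apply (auto simp: kron2_def Cmat_def)[2]
    apply (simp add: Cmat_def kron2_def scalar_prod_def sum4' sig1 sig2 sig3 sigT)
    done
qed


lemma trace_cost: "P \<in> carrier_mat 4 4 \<Longrightarrow>
  mtrace (P * Cmat) = 8 * mtrace P - 4 * (P$$(0,0) + P$$(0,3) + P$$(3,0) + P$$(3,3))"
  by (simp add: mtrace_def Cmat_def scalar_prod_def sum4 sum4' algebra_simps)

lemma real_lin_zero: fixes a b :: real assumes "\<forall>s. a*s + b*s^2 \<ge> 0" shows "a = 0"
proof (rule ccontr)
  assume "a \<noteq> 0"
  define s where "s = - a / (2*(\<bar>b\<bar>+1))"
  have h: "a*s + b*s^2 \<ge> 0" using assms by blast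
  have pos: "\<bar>b\<bar>+1 > 0" by simp
  have "b * s^2 \<le> \<bar>b\<bar> * s^2" by (simp add: mult_right_mono)
  also have "\<dots> < (\<bar>b\<bar> + 1) * s^2"
  proof -
    have "s \<noteq> 0" using \<open>a\<noteq>0\<close> pos by (simp add: s_def)
    hence "s^2 > 0" by simp
    thus ?thesis by (intro mult_strict_right_mono) auto
  qed
  finally have "a*s + b*s^2 < a*s + (\<bar>b\<bar>+1)*s^2" by simp
  also have "a*s + (\<bar>b\<bar>+1)*s^2 = - (a^2)/(4*(\<bar>b\<bar>+1))"
  proof -
    define B where "B = \<bar>b\<bar>+1"
    have "B > 0" using pos B_def by simp
    have "a*s + B*s^2 = - (a^2)/(4*B)" unfolding s_def B_def[symmetric] using \<open>B>0\<close>
      by (simp add: field_simps power2_eq_square)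
    thus ?thesis by (simp add: B_def)
  qed
  also have "\<dots> < 0" using \<open>a\<noteq>0\<close> pos by simp
  finally show False using h by simp
qed

definition bil :: "nat \<Rightarrow> complex mat \<Rightarrow> complex vec \<Rightarrow> complex vec \<Rightarrow> complex" where
  "bil n A u w = (\<Sum>i<n. \<Sum>j<n. cnj (u $ i) * A $$ (i,j) * w $ j)"

lemma bil_expand:
  "(\<Sum>i<n. \<Sum>j<n. cnj (x i + t * y i) * a i j * (x j + t * y j)) =
   (\<Sum>i<n. \<Sum>j<n. cnj (x i) * a i j * x j) + t * (\<Sum>i<n. \<Sum>j<n. cnj (x i) * a i j * y j)
   + cnj t * (\<Sum>i<n. \<Sum>j<n. cnj (y i) * a i j * x j) + cnj t * t * (\<Sum>i<n. \<Sum>j<n. cnj (y i) * a i j * y j)"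
proof -
  have "\<And>i j. cnj (x i + t * y i) * a i j * (x j + t * y j) =
     cnj (x i) * a i j * x j + t * (cnj (x i) * a i j * y j) + cnj t * (cnj (y i) * a i j * x j)
     + cnj t * t * (cnj (y i) * a i j * y j)" by (simp add: algebra_simps)
  then show ?thesis by (simp add: sum.distrib sum_distrib_left)
qed

lemma psd_kernel:
  assumes "psd n A" "v \<in> carrier_vec n" "w \<in> carrier_vec n" "bil n A v v = 0"
  shows "bil n A v w = 0 \<and> bil n A w v = 0"
proof -
  define P where "P = bil n A v w"
  define Q where "Q = bil n A w v"
  define r where "r = bil n A w w"
  have key: "Im (t*P + cnj t * Q + cnj t * t * r) = 0 \<and> Re (t*P + cnj t * Q + cnj t * t * r) \<ge> 0" for t
  proof -
    let ?u = "vec n (\<lambda>i. v $ i + t * w $ i)"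
    have "?u \<in> carrier_vec n" by simp
    with assms(1) have "Im (bil n A ?u ?u) = 0 \<and> Re (bil n A ?u ?u) \<ge> 0"
      unfolding psd_def bil_def Let_def by blast
    moreover have "bil n A ?u ?u = t*P + cnj t * Q + cnj t * t * r"
    proof -
      have "bil n A ?u ?u = (\<Sum>i<n. \<Sum>j<n. cnj (v$i + t * w$i) * A$$(i,j) * (v$j + t * w$j))"
        unfolding bil_def by simp
      also have "\<dots> = bil n A v v + t * P + cnj t * Q + cnj t * t * r"
        unfolding bil_expand P_def Q_def r_def bil_def by simp
      finally show ?thesis using assms(4) by simp
    qed
    ultimately show ?thesis by simp
  qed
  have "\<forall>s::real. Re (P+Q) * s + Re r * s^2 \<ge> 0"
  proof
    fix s::real
    from key[of "complex_of_real s"] show "Re (P+Q) * s + Re r * s^2 \<ge> 0"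
      by (simp add: algebra_simps power2_eq_square)
  qed
  hence a: "Re (P+Q) = 0" by (rule real_lin_zero)
  have b1: "Im (P+Q) + Im r = 0" using key[of 1] by simp
  have b2: "- Im (P+Q) + Im r = 0" using key[of "-1"] by simp
  have "\<forall>s::real. (- Im (P-Q)) * s + Re r * s^2 \<ge> 0"
  proof
    fix s::real
    from key[of "\<i> * complex_of_real s"] show "(- Im (P-Q)) * s + Re r * s^2 \<ge> 0"
      by (simp add: algebra_simps power2_eq_square)
  qed
  hence c: "Im (P-Q) = 0" using real_lin_zero by fastforce
  have d1: "Re (P-Q) + Im r = 0" using key[of "\<i>"] by (simp add: algebra_simps)
  have d2: "- Re (P-Q) + Im r = 0" using key[of "-\<i>"] by (simp add: algebra_simps)
  from a b1 b2 c d1 d2 have "Re P = 0" "Im P = 0" "Re Q = 0" "Im Q = 0" by simp_all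
  thus ?thesis unfolding P_def Q_def using complex_eqI by (metis zero_complex.sel)
qed


lemma block_alg:
  fixes x00 x01 x10 x11 c0 c1 d0 d1 :: complex
  assumes n: "c0*d0 + c1*d1 = 1"
    and h1: "x01*d0 = x00*d1" and h2: "x11*d0 = x10*d1"
    and h3: "c0*x10 = c1*x00" and h4: "c0*x11 = c1*x01"
  shows "x00 = c0*d0*(x00+x11)" "x01 = c0*d1*(x00+x11)" "x10 = c1*d0*(x00+x11)" "x11 = c1*d1*(x00+x11)"
proof -
  have "x00 - c0*d0*(x00+x11) = x00*(1 - (c0*d0+c1*d1)) + d1*(c1*x00 - c0*x10) + c0*(x10*d1 - x11*d0)"
    by (simp add: algebra_simps)
  also have "\<dots> = 0" using assms by simp
  finally show "x00 = c0*d0*(x00+x11)" by simp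
  have "x01 - c0*d1*(x00+x11) = x01*(1 - (c0*d0+c1*d1)) + c0*(x01*d0 - x00*d1) + d1*(c1*x01 - c0*x11)"
    by (simp add: algebra_simps)
  also have "\<dots> = 0" using assms by simp
  finally show "x01 = c0*d1*(x00+x11)" by simp
  have "x10 - c1*d0*(x00+x11) = x10*(1 - (c0*d0+c1*d1)) + d0*(c0*x10 - c1*x00) + c1*(x10*d1 - x11*d0)"
    by (simp add: algebra_simps)
  also have "\<dots> = 0" using assms by simp
  finally show "x10 = c1*d0*(x00+x11)" by simp
  have "x11 - c1*d1*(x00+x11) = x11*(1 - (c0*d0+c1*d1)) + d0*(c0*x11 - c1*x01) + c1*(x01*d0 - x00*d1)"
    by (simp add: algebra_simps)
  also have "\<dots> = 0" using assms by simp
  finally show "x11 = c1*d1*(x00+x11)" by simp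
qed

definition e4 :: "nat \<Rightarrow> complex vec" where "e4 b = vec 4 (\<lambda>a. if a = b then 1 else 0)"

lemma pure_unfold:
  assumes "\<sigma> \<in> pure2"
  obtains c0 c1 where "c0 * cnj c0 + c1 * cnj c1 = 1"
    "\<sigma> = mat 2 2 (\<lambda>(i,j). (if i = 0 then c0 else c1) * cnj (if j = 0 then c0 else c1))"
proof -
  from assms obtain \<psi> where psi: "\<psi> \<in> carrier_vec 2" "(\<Sum>i<2. cmod (\<psi> $ i)^2) = 1"
    "\<sigma> = mat 2 2 (\<lambda>(i,j). \<psi> $ i * cnj (\<psi> $ j))" unfolding pure2_def by blast
  have "complex_of_real (cmod (\<psi>$0)^2 + cmod (\<psi>$1)^2) = 1" using psi(2) by (simp add: sum2)
  hence n: "\<psi>$0 * cnj (\<psi>$0) + \<psi>$1 * cnj (\<psi>$1) = 1"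
    by (simp add: complex_norm_square[symmetric])
  have "\<sigma> = mat 2 2 (\<lambda>(i,j). (if i = 0 then \<psi>$0 else \<psi>$1) * cnj (if j = 0 then \<psi>$0 else \<psi>$1))"
    unfolding psi(3) by (rule eq_matI) (auto simp: less_Suc_eq numeral_eq_Suc)
  with n show ?thesis using that by blast
qed

lemma pure_coupling_value:
  assumes cp: "PP \<in> couplings \<rho> \<sigma>" and ps: "\<sigma> \<in> pure2" and rc: "\<rho> \<in> carrier_mat 2 2"
  shows "mtrace (PP * Cmat) = 8 - 4 * mtrace (\<rho> * \<sigma>)"
proof -
  obtain c0 c1 where n0: "c0 * cnj c0 + c1 * cnj c1 = 1" and
    sg: "\<sigma> = mat 2 2 (\<lambda>(i,j). (if i = 0 then c0 else c1) * cnj (if j = 0 then c0 else c1))"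
    using pure_unfold[OF ps] by blast
  define d0 where "d0 = cnj c0"
  define d1 where "d1 = cnj c1"
  have n: "c0*d0 + c1*d1 = 1" using n0 by (simp add: d0_def d1_def)
  from cp have den: "density 4 PP" and pd: "ptr_dual PP = \<sigma>" and ph: "ptr_H PP = transpose_mat \<rho>"
    unfolding couplings_def by auto
  hence psd: "psd 4 PP" and tr: "mtrace PP = 1" and car: "PP \<in> carrier_mat 4 4"
    unfolding density_def psd_def by auto
  have pd00: "PP$$(0,0) + PP$$(1,1) = c0*d0" using arg_cong[OF pd, of "\<lambda>M. M$$(0,0)"]
    by (simp add: ptr_dual_def sg sum2 d0_def)
  have pd01: "PP$$(0,2) + PP$$(1,3) = c0*d1" using arg_cong[OF pd, of "\<lambda>M. M$$(0,1)"]
    by (simp add: ptr_dual_def sg sum2 d1_def)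
  have pd10: "PP$$(2,0) + PP$$(3,1) = c1*d0" using arg_cong[OF pd, of "\<lambda>M. M$$(1,0)"]
    by (simp add: ptr_dual_def sg sum2 d0_def)
  have pd11: "PP$$(2,2) + PP$$(3,3) = c1*d1" using arg_cong[OF pd, of "\<lambda>M. M$$(1,1)"]
    by (simp add: ptr_dual_def sg sum2 d1_def)
  have ph00: "PP$$(0,0) + PP$$(2,2) = \<rho>$$(0,0)" using arg_cong[OF ph, of "\<lambda>M. M$$(0,0)"] rc
    by (simp add: ptr_H_def sum2 numeral_2_eq_2[symmetric] numeral_3_eq_3[symmetric])
  have ph01: "PP$$(0,1) + PP$$(2,3) = \<rho>$$(1,0)" using arg_cong[OF ph, of "\<lambda>M. M$$(0,1)"] rc
    by (simp add: ptr_H_def sum2 numeral_2_eq_2[symmetric] numeral_3_eq_3[symmetric])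
  have ph10: "PP$$(1,0) + PP$$(3,2) = \<rho>$$(0,1)" using arg_cong[OF ph, of "\<lambda>M. M$$(1,0)"] rc
    by (simp add: ptr_H_def sum2 numeral_2_eq_2[symmetric] numeral_3_eq_3[symmetric])
  have ph11: "PP$$(1,1) + PP$$(3,3) = \<rho>$$(1,1)" using arg_cong[OF ph, of "\<lambda>M. M$$(1,1)"] rc
    by (simp add: ptr_H_def sum2 numeral_2_eq_2[symmetric] numeral_3_eq_3[symmetric])
  define v0 where "v0 = vec 4 (\<lambda>a. if a = 0 then -d1 else if a = 2 then d0 else 0)"
  define v1 where "v1 = vec 4 (\<lambda>a. if a = 1 then -d1 else if a = 3 then d0 else 0)"
  have v0c: "v0 \<in> carrier_vec 4" and v1c: "v1 \<in> carrier_vec 4" by (simp_all add: v0_def v1_def)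
  have q0: "Im (bil 4 PP v0 v0) = 0 \<and> Re (bil 4 PP v0 v0) \<ge> 0"
    using psd v0c unfolding psd_def bil_def Let_def by blast
  have q1: "Im (bil 4 PP v1 v1) = 0 \<and> Re (bil 4 PP v1 v1) \<ge> 0"
    using psd v1c unfolding psd_def bil_def Let_def by blast
  have "bil 4 PP v0 v0 + bil 4 PP v1 v1 =
     c1*d1*(PP$$(0,0) + PP$$(1,1)) - c1*d0*(PP$$(0,2) + PP$$(1,3))
     - c0*d1*(PP$$(2,0) + PP$$(3,1)) + c0*d0*(PP$$(2,2) + PP$$(3,3))"
    by (simp add: bil_def v0_def v1_def sum4 d0_def d1_def algebra_simps)
  also have "\<dots> = 0" unfolding pd00 pd01 pd10 pd11 by (simp add: algebra_simps)
  finally have "bil 4 PP v0 v0 + bil 4 PP v1 v1 = 0" .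
  with q0 q1 have z0: "bil 4 PP v0 v0 = 0" and z1: "bil 4 PP v1 v1 = 0"
    by (auto simp: complex_eq_iff)
  have ec: "e4 b \<in> carrier_vec 4" for b by (simp add: e4_def)
  have K0: "bil 4 PP v0 (e4 b) = 0 \<and> bil 4 PP (e4 b) v0 = 0" for b
    by (rule psd_kernel[OF psd v0c ec z0])
  have K1: "bil 4 PP v1 (e4 b) = 0 \<and> bil 4 PP (e4 b) v1 = 0" for b
    by (rule psd_kernel[OF psd v1c ec z1])
  note Ks = K0[of 0] K0[of 1] K0[of 2] K0[of 3] K1[of 0] K1[of 1] K1[of 2] K1[of 3]
  have R: "c0 * PP$$(2,b) = c1 * PP$$(0,b)" "c0 * PP$$(3,b) = c1 * PP$$(1,b)"
      "PP$$(b,2)*d0 = PP$$(b,0)*d1" "PP$$(b,3)*d0 = PP$$(b,1)*d1"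
    if "b \<in> {0,1,2,3}" for b
    using that Ks by (auto simp: bil_def v0_def v1_def e4_def sum4 d0_def d1_def algebra_simps)
  have b00: "PP$$(0,0) = c0*d0*(PP$$(0,0) + PP$$(2,2))"
    by (rule block_alg(1)[OF n]) (use R in auto)
  have b01: "PP$$(0,3) = c0*d1*(PP$$(0,1) + PP$$(2,3))"
    by (rule block_alg(2)[OF n]) (use R in auto)
  have b10: "PP$$(3,0) = c1*d0*(PP$$(1,0) + PP$$(3,2))"
    by (rule block_alg(3)[OF n]) (use R in auto)
  have b11: "PP$$(3,3) = c1*d1*(PP$$(1,1) + PP$$(3,3))"
    by (rule block_alg(4)[OF n]) (use R in auto)
  have mt: "mtrace (\<rho> * \<sigma>) = \<rho>$$(0,0)*c0*d0 + \<rho>$$(0,1)*c1*d0 + \<rho>$$(1,0)*c0*d1 + \<rho>$$(1,1)*c1*d1"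
    using rc by (simp add: mtrace_def sg scalar_prod_def sum2 sum2' d0_def d1_def)
  have f00: "PP$$(0,0) = c0*d0*\<rho>$$(0,0)" using b00 unfolding ph00 .
  have f01: "PP$$(0,3) = c0*d1*\<rho>$$(1,0)" using b01 unfolding ph01 .
  have f10: "PP$$(3,0) = c1*d0*\<rho>$$(0,1)" using b10 unfolding ph10 .
  have f11: "PP$$(3,3) = c1*d1*\<rho>$$(1,1)" using b11 unfolding ph11 .
  show ?thesis
    unfolding trace_cost[OF car] tr mt f00 f01 f10 f11 by (simp add: algebra_simps)
qed



lemma states_carrier: "\<rho> \<in> states2 \<Longrightarrow> \<rho> \<in> carrier_mat 2 2"
  by (simp add: states2_def density_def psd_def)

lemma states_trace: "\<rho> \<in> states2 \<Longrightarrow> \<rho>$$(0,0) + \<rho>$$(1,1) = 1"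
proof -
  assume a: "\<rho> \<in> states2"
  hence "mtrace \<rho> = 1" by (simp add: states2_def density_def)
  moreover have "dim_row \<rho> = 2" using states_carrier[OF a] by simp
  ultimately show ?thesis unfolding mtrace_def by (simp add: sum2)
qed

lemma states_psd: "\<rho> \<in> states2 \<Longrightarrow> v \<in> carrier_vec 2 \<Longrightarrow> Im (bil 2 \<rho> v v) = 0 \<and> Re (bil 2 \<rho> v v) \<ge> 0"
  unfolding states2_def density_def psd_def bil_def Let_def by blast

lemma product_coupling:
  assumes rs: "\<rho> \<in> states2" and ps: "\<sigma> \<in> pure2"
  shows "kron2 \<sigma> (transpose_mat \<rho>) \<in> couplings \<rho> \<sigma>"
proof -
  obtain c0 c1 where n0: "c0 * cnj c0 + c1 * cnj c1 = 1" and
    sg: "\<sigma> = mat 2 2 (\<lambda>(i,j). (if i = 0 then c0 else c1) * cnj (if j = 0 then c0 else c1))"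
    using pure_unfold[OF ps] by blast
  have rc: "\<rho> \<in> carrier_mat 2 2" using states_carrier[OF rs] .
  have rt: "\<rho>$$(0,0) + \<rho>$$(1,1) = 1" using states_trace[OF rs] .
  let ?K = "kron2 \<sigma> (transpose_mat \<rho>)"
  have Kc: "?K \<in> carrier_mat 4 4" by (simp add: kron2_def)
  have psdK: "psd 4 ?K"
    unfolding psd_def
  proof (intro conjI Kc ballI)
    fix v :: "complex vec" assume vc: "v \<in> carrier_vec 4"
    define u where "u = vec 2 (\<lambda>k. c0 * cnj (v$k) + c1 * cnj (v$(2+k)))"
    have uc: "u \<in> carrier_vec 2" by (simp add: u_def)
    have "(\<Sum>i<4. \<Sum>j<4. cnj (v $ i) * ?K $$ (i,j) * v $ j) = bil 2 \<rho> u u"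
      using rc by (simp add: bil_def u_def kron2_def sg sum4 sum2 algebra_simps
          numeral_2_eq_2[symmetric] numeral_3_eq_3[symmetric])
    with states_psd[OF rs uc]
    show "let q = \<Sum>i<4. \<Sum>j<4. cnj (v $ i) * ?K $$ (i, j) * v $ j in Im q = 0 \<and> 0 \<le> Re q"
      by (simp add: Let_def)
  qed
  have trK: "mtrace ?K = 1"
  proof -
    have "mtrace ?K = (c0 * cnj c0 + c1 * cnj c1) * (\<rho>$$(0,0) + \<rho>$$(1,1))"
      using rc by (simp add: mtrace_def kron2_def sg sum4 algebra_simps)
    thus ?thesis using n0 rt by simp
  qed
  have pdK: "ptr_dual ?K = \<sigma>"
    apply (rule mat2_ext)
      apply (simp add: ptr_dual_def)
     apply (simp add: sg)
    using rc rt by (auto simp: ptr_dual_def kron2_def sg sum2 algebra_simps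
          numeral_2_eq_2[symmetric] numeral_3_eq_3[symmetric] distrib_left[symmetric])
  have n1: "c0 * (cnj c0 * x) + c1 * (cnj c1 * x) = x" for x
  proof -
    have "c0 * (cnj c0 * x) + c1 * (cnj c1 * x) = (c0 * cnj c0 + c1 * cnj c1) * x" by (simp add: algebra_simps)
    thus ?thesis using n0 by simp
  qed
  have phK: "ptr_H ?K = transpose_mat \<rho>"
    apply (rule mat2_ext)
      apply (simp add: ptr_H_def)
    using rc apply simp
    using rc by (auto simp: ptr_H_def kron2_def sg sum2 algebra_simps
          numeral_2_eq_2[symmetric] numeral_3_eq_3[symmetric]) (rule n1)+
  show ?thesis unfolding couplings_def density_def using psdK trK pdK phK by simp
qed

lemma QW2_pure:
  assumes rs: "\<rho> \<in> states2" and ps: "\<sigma> \<in> pure2"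
  shows "QW2 [sigma1, sigma2, sigma3] \<rho> \<sigma> = 8 - 4 * Re (mtrace (\<rho> * \<sigma>))"
proof -
  have "(\<lambda>P. Re (mtrace (P * cost_op [sigma1, sigma2, sigma3]))) ` couplings \<rho> \<sigma> = {8 - 4 * Re (mtrace (\<rho> * \<sigma>))}"
    using product_coupling[OF rs ps] pure_coupling_value[OF _ ps states_carrier[OF rs]]
    by (auto simp: cost_eq)
  thus ?thesis unfolding QW2_def by simp
qed



lemma adj_carrier[simp]: "A \<in> carrier_mat n m \<Longrightarrow> adj A \<in> carrier_mat m n"
  by (simp add: adj_def)
lemma adj_index[simp]: "i < dim_col A \<Longrightarrow> j < dim_row A \<Longrightarrow> adj A $$ (i,j) = cnj (A $$ (j,i))"
  by (simp add: adj_def)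
lemma adj_dims[simp]: "dim_row (adj A) = dim_col A" "dim_col (adj A) = dim_row A"
  by (simp_all add: adj_def)
lemma adj_adj: "adj (adj A) = A"
  by (rule eq_matI) (simp_all add: adj_def)

lemma mtrace_comm: assumes "A \<in> carrier_mat n m" "B \<in> carrier_mat m n"
  shows "mtrace (A * B) = mtrace (B * A)"
proof -
  have "mtrace (A * B) = (\<Sum>i<n. \<Sum>k<m. A$$(i,k) * B$$(k,i))"
    using assms by (simp add: mtrace_def scalar_prod_def atLeast0LessThan)
  also have "\<dots> = (\<Sum>k<m. \<Sum>i<n. B$$(k,i) * A$$(i,k))"
    by (subst sum.swap) (simp add: mult.commute)
  also have "\<dots> = mtrace (B * A)"
    using assms by (simp add: mtrace_def scalar_prod_def atLeast0LessThan)
  finally show ?thesis .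
qed

lemma sum_reorder4:
  "(\<Sum>i<n. \<Sum>j<n. \<Sum>l<n. \<Sum>k<n. f i j l k) = (\<Sum>k<n. \<Sum>l<n. \<Sum>i<n. \<Sum>j<n. (f i j l k :: 'a::comm_monoid_add))"
proof -
  have "(\<Sum>i<n. \<Sum>j<n. \<Sum>l<n. \<Sum>k<n. f i j l k) = (\<Sum>i<n. \<Sum>l<n. \<Sum>j<n. \<Sum>k<n. f i j l k)"
    by (rule sum.cong[OF refl], rule sum.swap)
  also have "\<dots> = (\<Sum>i<n. \<Sum>l<n. \<Sum>k<n. \<Sum>j<n. f i j l k)"
    by (rule sum.cong[OF refl], rule sum.cong[OF refl], rule sum.swap)
  also have "\<dots> = (\<Sum>l<n. \<Sum>i<n. \<Sum>k<n. \<Sum>j<n. f i j l k)"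
    by (rule sum.swap)
  also have "\<dots> = (\<Sum>l<n. \<Sum>k<n. \<Sum>i<n. \<Sum>j<n. f i j l k)"
    by (rule sum.cong[OF refl], rule sum.swap)
  also have "\<dots> = (\<Sum>k<n. \<Sum>l<n. \<Sum>i<n. \<Sum>j<n. f i j l k)"
    by (rule sum.swap)
  finally show ?thesis .
qed

lemma bil_conj:
  assumes A: "A \<in> carrier_mat n n" and B: "B \<in> carrier_mat n n"
    and u: "u \<in> carrier_vec n" and v: "v \<in> carrier_vec n"
  shows "bil n (B * A * adj B) u v = bil n A (adj B *\<^sub>v u) (adj B *\<^sub>v v)"
proof -
  have e1: "(B * A * adj B) $$ (i,j) = (\<Sum>l<n. (\<Sum>k<n. B$$(i,k) * A$$(k,l)) * cnj (B$$(j,l)))"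
    if "i < n" "j < n" for i j
    using A B that by (simp add: scalar_prod_def atLeast0LessThan)
  have e2: "(adj B *\<^sub>v w) $ k = (\<Sum>i<n. cnj (B$$(i,k)) * w $ i)" if "k < n" "w \<in> carrier_vec n" for k w
    using B that by (simp add: scalar_prod_def atLeast0LessThan mult.commute)
  have "bil n (B * A * adj B) u v =
      (\<Sum>i<n. \<Sum>j<n. cnj (u$i) * (\<Sum>l<n. (\<Sum>k<n. B$$(i,k) * A$$(k,l)) * cnj (B$$(j,l))) * v$j)"
    unfolding bil_def by (simp add: e1)
  also have "\<dots> = (\<Sum>i<n. \<Sum>j<n. \<Sum>l<n. \<Sum>k<n. cnj (u$i) * B$$(i,k) * A$$(k,l) * cnj (B$$(j,l)) * v$j)"
    by (simp add: sum_distrib_left sum_distrib_right mult.assoc)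
  also have "\<dots> = (\<Sum>k<n. \<Sum>l<n. \<Sum>i<n. \<Sum>j<n. cnj (u$i) * B$$(i,k) * A$$(k,l) * cnj (B$$(j,l)) * v$j)"
    by (rule sum_reorder4)
  also have "\<dots> = bil n A (adj B *\<^sub>v u) (adj B *\<^sub>v v)"
    unfolding bil_def using u v
    by (simp add: e2 sum_distrib_left sum_distrib_right mult.assoc mult.left_commute mult.commute)
  finally show ?thesis .
qed

lemma psd_bil: "psd n A \<longleftrightarrow> A \<in> carrier_mat n n \<and> (\<forall>v \<in> carrier_vec n. Im (bil n A v v) = 0 \<and> Re (bil n A v v) \<ge> 0)"
  by (simp add: psd_def bil_def Let_def)

lemma psd_conj: assumes "psd n A" "B \<in> carrier_mat n n" shows "psd n (B * A * adj B)"
proof -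
  have A: "A \<in> carrier_mat n n" using assms(1) psd_bil by blast
  show ?thesis unfolding psd_bil
  proof (intro conjI ballI)
    show "B * A * adj B \<in> carrier_mat n n" using A assms(2) by auto
    fix v :: "complex vec" assume v: "v \<in> carrier_vec n"
    have w: "adj B *\<^sub>v v \<in> carrier_vec n" using assms(2) v by (metis adj_carrier mult_mat_vec_carrier)
    show "Im (bil n (B * A * adj B) v v) = 0" "Re (bil n (B * A * adj B) v v) \<ge> 0"
      unfolding bil_conj[OF A assms(2) v v] using assms(1) w psd_bil by blast+
  qed
qed

definition vconj :: "complex vec \<Rightarrow> complex vec" where "vconj u = vec (dim_vec u) (\<lambda>i. cnj (u $ i))"

lemma bil_cconj: assumes "A \<in> carrier_mat n n" "u \<in> carrier_vec n" "v \<in> carrier_vec n"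
  shows "bil n (cconj A) u v = cnj (bil n A (vconj u) (vconj v))"
  using assms by (simp add: bil_def cconj_def vconj_def)

lemma psd_cconj: assumes "psd n A" shows "psd n (cconj A)"
proof -
  have A: "A \<in> carrier_mat n n" using assms(1) psd_bil by blast
  show ?thesis unfolding psd_bil
  proof (intro conjI ballI)
    show "cconj A \<in> carrier_mat n n" using A by (simp add: cconj_def)
    fix v :: "complex vec" assume v: "v \<in> carrier_vec n"
    have w: "vconj v \<in> carrier_vec n" using v by (simp add: vconj_def)
    show "Im (bil n (cconj A) v v) = 0" "Re (bil n (cconj A) v v) \<ge> 0"
      unfolding bil_cconj[OF A v v] using assms(1) w psd_bil by auto
  qed
qed

lemma cconj_carrier[simp]: "A \<in> carrier_mat n m \<Longrightarrow> cconj A \<in> carrier_mat n m"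
  by (simp add: cconj_def)
lemma cconj_index[simp]: "i < dim_row A \<Longrightarrow> j < dim_col A \<Longrightarrow> cconj A $$ (i,j) = cnj (A $$ (i,j))"
  by (simp add: cconj_def)
lemma cconj_dims[simp]: "dim_row (cconj A) = dim_row A" "dim_col (cconj A) = dim_col A"
  by (simp_all add: cconj_def)
lemma cconj_cconj: "cconj (cconj A) = A"
  by (rule eq_matI) (simp_all add: cconj_def)

lemma mtrace_cconj: "A \<in> carrier_mat n n \<Longrightarrow> mtrace (cconj A) = cnj (mtrace A)"
  by (simp add: mtrace_def cconj_def)

lemma unitary_trace: assumes "unitary2 V" "\<rho> \<in> carrier_mat 2 2"
  shows "mtrace (V * \<rho> * adj V) = mtrace \<rho>"
proof -
  have V: "V \<in> carrier_mat 2 2" and VV: "adj V * V = 1\<^sub>m 2" using assms(1) unfolding unitary2_def by auto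
  have "mtrace ((V * \<rho>) * adj V) = mtrace (adj V * (V * \<rho>))"
    by (rule mtrace_comm[of _ 2 2]) (use V assms(2) in auto)
  also have "adj V * (V * \<rho>) = (adj V * V) * \<rho>" using V assms(2) by (metis adj_carrier assoc_mult_mat)
  also have "\<dots> = \<rho>" using VV assms(2) by simp
  finally show ?thesis .
qed

lemma states_uconj: assumes "unitary2 V" "\<rho> \<in> states2" shows "unitary_conj V \<rho> \<in> states2"
  using assms unitary_trace[OF assms(1) states_carrier[OF assms(2)]] psd_conj[of 2 \<rho> V]
  unfolding states2_def density_def unitary_conj_def unitary2_def by auto

lemma states_cconj: assumes "\<rho> \<in> states2" shows "cconj \<rho> \<in> states2"
  using assms psd_cconj[of 2 \<rho>] mtrace_cconj[OF states_carrier[OF assms]]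
  unfolding states2_def density_def by auto

lemma states_aconj: assumes "unitary2 V" "\<rho> \<in> states2" shows "antiunitary_conj V \<rho> \<in> states2"
  using states_uconj[OF assms(1) states_cconj[OF assms(2)]]
  by (simp add: antiunitary_conj_def unitary_conj_def)



definition Wm :: "complex mat \<Rightarrow> complex mat" where "Wm V = kron2 V (cconj V)"

lemma Wm_carrier[simp]: "Wm V \<in> carrier_mat 4 4" by (simp add: Wm_def kron2_def)
lemma Wm_dims[simp]: "dim_row (Wm V) = 4" "dim_col (Wm V) = 4" by (simp_all add: Wm_def kron2_def)

lemma Wm_index: "V \<in> carrier_mat 2 2 \<Longrightarrow> a < 4 \<Longrightarrow> b < 4 \<Longrightarrow>
   Wm V $$ (a,b) = V$$(a div 2, b div 2) * cnj (V$$(a mod 2, b mod 2))"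
  by (simp add: Wm_def kron2_def)

lemma conj3_index: assumes "A \<in> carrier_mat n n" "B \<in> carrier_mat n n" "i < n" "j < n"
  shows "(B * A * adj B) $$ (i,j) = (\<Sum>c<n. \<Sum>l<n. B$$(i,c) * A$$(c,l) * cnj (B$$(j,l)))"
proof -
  have "(B * A * adj B) $$ (i,j) = (\<Sum>l<n. (\<Sum>c<n. B$$(i,c) * A$$(c,l)) * cnj (B$$(j,l)))"
    using assms by (simp add: scalar_prod_def atLeast0LessThan)
  also have "\<dots> = (\<Sum>l<n. \<Sum>c<n. B$$(i,c) * A$$(c,l) * cnj (B$$(j,l)))"
    by (simp add: sum_distrib_right)
  also have "\<dots> = (\<Sum>c<n. \<Sum>l<n. B$$(i,c) * A$$(c,l) * cnj (B$$(j,l)))"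
    by (rule sum.swap)
  finally show ?thesis .
qed

lemma G_index: "V \<in> carrier_mat 2 2 \<Longrightarrow> m < 2 \<Longrightarrow> m' < 2 \<Longrightarrow>
  (adj V * V) $$ (m,m') = cnj (V$$(0,m)) * V$$(0,m') + cnj (V$$(1,m)) * V$$(1,m')"
  by (simp add: scalar_prod_def sum2')

lemma less2_cases: "(i::nat) < 2 \<Longrightarrow> (i = 0 \<Longrightarrow> P) \<Longrightarrow> (i = 1 \<Longrightarrow> P) \<Longrightarrow> P"
  by (metis less_2_cases One_nat_def)

lemma ptr_dual_W:
  assumes P: "P \<in> carrier_mat 4 4" and V: "V \<in> carrier_mat 2 2" and ij: "i < 2" "j < 2"
  shows "ptr_dual (Wm V * P * adj (Wm V)) $$ (i,j) =
    (\<Sum>c<4. \<Sum>l<4. V$$(i,c div 2) * cnj (V$$(j,l div 2)) * P$$(c,l) *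
        (cnj (V$$(0,c mod 2)) * V$$(0,l mod 2) + cnj (V$$(1,c mod 2)) * V$$(1,l mod 2)))"
proof -
  have "ptr_dual (Wm V * P * adj (Wm V)) $$ (i,j) = (\<Sum>k<2. (Wm V * P * adj (Wm V)) $$ (2*i+k, 2*j+k))"
    using ij by (simp add: ptr_dual_def)
  also have "\<dots> = (\<Sum>k<2. \<Sum>c<4. \<Sum>l<4. Wm V $$ (2*i+k,c) * P$$(c,l) * cnj (Wm V $$ (2*j+k,l)))"
    using ij by (intro sum.cong refl conj3_index[OF P]) auto
  also have "\<dots> = (\<Sum>c<4. \<Sum>l<4. V$$(i,c div 2) * cnj (V$$(j,l div 2)) * P$$(c,l) *
        (cnj (V$$(0,c mod 2)) * V$$(0,l mod 2) + cnj (V$$(1,c mod 2)) * V$$(1,l mod 2)))"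
    using ij apply -
    apply (erule less2_cases; erule less2_cases)
    by (simp_all add: sum2 sum4 Wm_index V algebra_simps)
  finally show ?thesis .
qed

lemma ptr_dual_carrier[simp]: "ptr_dual P \<in> carrier_mat 2 2" by (simp add: ptr_dual_def)
lemma ptr_H_carrier[simp]: "ptr_H P \<in> carrier_mat 2 2" by (simp add: ptr_H_def)

lemma ptr_dual_Wu:
  assumes P: "P \<in> carrier_mat 4 4" and V: "V \<in> carrier_mat 2 2" and VV: "adj V * V = 1\<^sub>m 2"
  shows "ptr_dual (Wm V * P * adj (Wm V)) = V * ptr_dual P * adj V"
proof (rule mat2_ext)
  show "ptr_dual (Wm V * P * adj (Wm V)) \<in> carrier_mat 2 2" by simp
  show "V * ptr_dual P * adj V \<in> carrier_mat 2 2" using V by auto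
  show "\<forall>i\<in>{0, 1}. \<forall>j\<in>{0, 1}. ptr_dual (Wm V * P * adj (Wm V)) $$ (i, j) = (V * ptr_dual P * adj V) $$ (i, j)"
  proof (intro ballI)
    fix i j :: nat assume "i \<in> {0,1}" "j \<in> {0,1}"
    hence ij: "i < 2" "j < 2" by auto
    have g: "cnj (V$$(0,c mod 2)) * V$$(0,l mod 2) + cnj (V$$(1,c mod 2)) * V$$(1,l mod 2)
        = (if c mod 2 = l mod 2 then 1 else 0)" for c l
    proof -
      have "cnj (V$$(0,c mod 2)) * V$$(0,l mod 2) + cnj (V$$(1,c mod 2)) * V$$(1,l mod 2) = (adj V * V) $$ (c mod 2, l mod 2)"
        using G_index[OF V, of "c mod 2" "l mod 2"] by simp
      also have "\<dots> = (if c mod 2 = l mod 2 then 1 else 0)" unfolding VV by simp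
      finally show ?thesis .
    qed
    have "ptr_dual (Wm V * P * adj (Wm V)) $$ (i,j) =
      (\<Sum>c<4. \<Sum>l<4. V$$(i,c div 2) * cnj (V$$(j,l div 2)) * P$$(c,l) * (if c mod 2 = l mod 2 then 1 else 0))"
      unfolding ptr_dual_W[OF P V ij] g ..
    also have "\<dots> = (V * ptr_dual P * adj V) $$ (i,j)"
      unfolding conj3_index[OF ptr_dual_carrier V ij]
      using ij apply -
      apply (erule less2_cases; erule less2_cases)
      by (simp_all add: sum2 sum4 ptr_dual_def algebra_simps numeral_2_eq_2[symmetric] numeral_3_eq_3[symmetric])
    finally show "ptr_dual (Wm V * P * adj (Wm V)) $$ (i, j) = (V * ptr_dual P * adj V) $$ (i, j)" .
  qed
qed

lemma ptr_H_Wu: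
  assumes P: "P \<in> carrier_mat 4 4" and V: "V \<in> carrier_mat 2 2" and VV: "adj V * V = 1\<^sub>m 2"
  shows "ptr_H (Wm V * P * adj (Wm V)) = cconj V * ptr_H P * adj (cconj V)"
proof (rule mat2_ext)
  show "ptr_H (Wm V * P * adj (Wm V)) \<in> carrier_mat 2 2" by simp
  show "cconj V * ptr_H P * adj (cconj V) \<in> carrier_mat 2 2" using V by auto
  have CV: "cconj V \<in> carrier_mat 2 2" using V by simp
  show "\<forall>i\<in>{0, 1}. \<forall>j\<in>{0, 1}. ptr_H (Wm V * P * adj (Wm V)) $$ (i, j) = (cconj V * ptr_H P * adj (cconj V)) $$ (i, j)"
  proof (intro ballI)
    fix i j :: nat assume "i \<in> {0,1}" "j \<in> {0,1}"
    hence ij: "i < 2" "j < 2" by auto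
    have g: "cnj (V$$(0,d div 2)) * V$$(0,c div 2) + cnj (V$$(1,d div 2)) * V$$(1,c div 2)
        = (if d div 2 = c div 2 then 1 else 0)" if "c < 4" "d < 4" for c d
    proof -
      have "cnj (V$$(0,d div 2)) * V$$(0,c div 2) + cnj (V$$(1,d div 2)) * V$$(1,c div 2) = (adj V * V) $$ (d div 2, c div 2)"
        using G_index[OF V, of "d div 2" "c div 2"] that by simp
      also have "\<dots> = (if d div 2 = c div 2 then 1 else 0)" unfolding VV using that by simp
      finally show ?thesis .
    qed
    have "ptr_H (Wm V * P * adj (Wm V)) $$ (i,j) = (\<Sum>k<2. (Wm V * P * adj (Wm V)) $$ (2*k+i, 2*k+j))"
      using ij by (simp add: ptr_H_def)
    also have "\<dots> = (\<Sum>k<2. \<Sum>c<4. \<Sum>l<4. Wm V $$ (2*k+i,c) * P$$(c,l) * cnj (Wm V $$ (2*k+j,l)))"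
      using ij by (intro sum.cong refl conj3_index[OF P]) auto
    also have "\<dots> = (\<Sum>c<4. \<Sum>d<4. cnj (V$$(i,c mod 2)) * V$$(j,d mod 2) * P$$(c,d) *
        (cnj (V$$(0,d div 2)) * V$$(0,c div 2) + cnj (V$$(1,d div 2)) * V$$(1,c div 2)))"
      using ij apply -
      apply (erule less2_cases; erule less2_cases)
      by (simp_all add: sum2 sum4 Wm_index V algebra_simps)
    also have "\<dots> = (\<Sum>c<4. \<Sum>d<4. cnj (V$$(i,c mod 2)) * V$$(j,d mod 2) * P$$(c,d) *
        (if d div 2 = c div 2 then 1 else 0))"
      by (intro sum.cong refl, subst g) auto
    also have "\<dots> = (cconj V * ptr_H P * adj (cconj V)) $$ (i,j)"
      unfolding conj3_index[OF ptr_H_carrier CV ij]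
      using ij V apply -
      apply (erule less2_cases; erule less2_cases)
      by (simp_all add: sum2 sum4 ptr_H_def algebra_simps numeral_2_eq_2[symmetric] numeral_3_eq_3[symmetric])
    finally show "ptr_H (Wm V * P * adj (Wm V)) $$ (i, j) = (cconj V * ptr_H P * adj (cconj V)) $$ (i, j)" .
  qed
qed

lemma transpose_uconj:
  assumes V: "V \<in> carrier_mat 2 2" and R: "\<rho> \<in> carrier_mat 2 2"
  shows "transpose_mat (V * \<rho> * adj V) = cconj V * transpose_mat \<rho> * adj (cconj V)"
proof (rule mat2_ext)
  show "transpose_mat (V * \<rho> * adj V) \<in> carrier_mat 2 2" using V R by auto
  show "cconj V * transpose_mat \<rho> * adj (cconj V) \<in> carrier_mat 2 2" using V R by auto
  have CV: "cconj V \<in> carrier_mat 2 2" using V by simp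
  have RT: "transpose_mat \<rho> \<in> carrier_mat 2 2" using R by simp
  show "\<forall>i\<in>{0, 1}. \<forall>j\<in>{0, 1}. transpose_mat (V * \<rho> * adj V) $$ (i, j) = (cconj V * transpose_mat \<rho> * adj (cconj V)) $$ (i, j)"
  proof (intro ballI)
    fix i j :: nat assume "i \<in> {0,1}" "j \<in> {0,1}"
    hence ij: "i < 2" "j < 2" by auto
    have "transpose_mat (V * \<rho> * adj V) $$ (i, j) = (V * \<rho> * adj V) $$ (j,i)" using V R ij by simp
    also have "\<dots> = (cconj V * transpose_mat \<rho> * adj (cconj V)) $$ (i, j)"
      unfolding conj3_index[OF R V ij(2) ij(1)] conj3_index[OF RT CV ij]
      using V R ij by (simp add: sum2 algebra_simps)
    finally show "transpose_mat (V * \<rho> * adj V) $$ (i, j) = (cconj V * transpose_mat \<rho> * adj (cconj V)) $$ (i, j)" .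
  qed
qed

lemma Wm_unitary:
  assumes V: "V \<in> carrier_mat 2 2" and VV: "adj V * V = 1\<^sub>m 2"
  shows "adj (Wm V) * Wm V = 1\<^sub>m 4"
proof (rule eq_matI)
  fix a b assume ab: "a < dim_row (1\<^sub>m 4)" "b < dim_col (1\<^sub>m 4)"
  hence ab4: "a < 4" "b < 4" by auto
  have G: "cnj (V$$(0,m)) * V$$(0,m') + cnj (V$$(1,m)) * V$$(1,m') = (if m = m' then 1 else 0)"
    if "m < 2" "m' < 2" for m m'
    using G_index[OF V that] VV that by simp
  have "(adj (Wm V) * Wm V) $$ (a,b) = (\<Sum>c<4. cnj (Wm V $$ (c,a)) * Wm V $$ (c,b))"
    using ab4 by (simp add: scalar_prod_def atLeast0LessThan)
  also have "\<dots> = (cnj (V$$(0,a div 2)) * V$$(0,b div 2) + cnj (V$$(1,a div 2)) * V$$(1,b div 2)) *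
      cnj (cnj (V$$(0,a mod 2)) * V$$(0,b mod 2) + cnj (V$$(1,a mod 2)) * V$$(1,b mod 2))"
    using ab4 by (simp add: sum4 Wm_index V algebra_simps)
  also have "\<dots> = (if a div 2 = b div 2 then 1 else 0) * cnj (if a mod 2 = b mod 2 then 1 else 0)"
  proof -
    have "a div 2 < 2" "b div 2 < 2" "a mod 2 < 2" "b mod 2 < 2" using ab4 by auto
    from G[OF this(1,2)] G[OF this(3,4)] show ?thesis by (simp only:)
  qed
  also have "\<dots> = 1\<^sub>m 4 $$ (a,b)"
    using ab4 by (auto, metis div_mult_mod_eq)
  finally show "(adj (Wm V) * Wm V) $$ (a,b) = 1\<^sub>m 4 $$ (a,b)" .
qed auto

definition fvec :: "complex vec" where "fvec = vec 4 (\<lambda>a. if a = 0 \<or> a = 3 then 1 else 0)"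

lemma fvec_carrier[simp]: "fvec \<in> carrier_vec 4" by (simp add: fvec_def)

lemma less4: "(c::nat) < 4 \<longleftrightarrow> c = 0 \<or> c = 1 \<or> c = 2 \<or> c = 3" by auto

lemma Wm_fvec:
  assumes V: "V \<in> carrier_mat 2 2" and VV: "adj V * V = 1\<^sub>m 2"
  shows "adj (Wm V) *\<^sub>v fvec = fvec"
proof (rule eq_vecI)
  fix c assume "c < dim_vec fvec"
  hence c4: "c < 4" by (simp add: fvec_def)
  have G: "cnj (V$$(0,m)) * V$$(0,m') + cnj (V$$(1,m)) * V$$(1,m') = (if m = m' then 1 else 0)"
    if "m < 2" "m' < 2" for m m'
    using G_index[OF V that] VV that by simp
  have "(adj (Wm V) *\<^sub>v fvec) $ c = cnj (V$$(0,c div 2)) * V$$(0,c mod 2) + cnj (V$$(1,c div 2)) * V$$(1,c mod 2)"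
    using c4 by (simp add: scalar_prod_def sum4' fvec_def Wm_index V)
  also have "\<dots> = fvec $ c"
  proof -
    have "c div 2 < 2" "c mod 2 < 2" using c4 by auto
    from G[OF this] have "cnj (V$$(0,c div 2)) * V$$(0,c mod 2) + cnj (V$$(1,c div 2)) * V$$(1,c mod 2) = (if c div 2 = c mod 2 then 1 else 0)" .
    moreover have "fvec $ c = (if c div 2 = c mod 2 then 1 else 0)"
      using c4 by (auto simp: fvec_def less4)
    ultimately show ?thesis by simp
  qed
  finally show "(adj (Wm V) *\<^sub>v fvec) $ c = fvec $ c" .
qed (simp add: fvec_def)

lemma trace_cost_bil: "P \<in> carrier_mat 4 4 \<Longrightarrow> mtrace (P * Cmat) = 8 * mtrace P - 4 * bil 4 P fvec fvec"
  unfolding trace_cost by (simp add: bil_def fvec_def sum4)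



lemma gen_unitary_trace: assumes W: "W \<in> carrier_mat n n" and WW: "adj W * W = 1\<^sub>m n" and P: "P \<in> carrier_mat n n"
  shows "mtrace (W * P * adj W) = mtrace P"
proof -
  have "mtrace ((W * P) * adj W) = mtrace (adj W * (W * P))"
    by (rule mtrace_comm[of _ n n]) (use W P in auto)
  also have "adj W * (W * P) = (adj W * W) * P" using W P by (metis adj_carrier assoc_mult_mat)
  also have "\<dots> = P" using WW P by simp
  finally show ?thesis .
qed

lemma couplings_carrier: "P \<in> couplings \<rho> \<omega> \<Longrightarrow> P \<in> carrier_mat 4 4"
  by (simp add: couplings_def density_def psd_def)

lemma coupling_uconj:
  assumes U: "unitary2 V" and R: "\<rho> \<in> carrier_mat 2 2" and O: "\<omega> \<in> carrier_mat 2 2"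
    and P: "P \<in> couplings \<rho> \<omega>"
  shows "Wm V * P * adj (Wm V) \<in> couplings (unitary_conj V \<rho>) (unitary_conj V \<omega>)"
    "Re (mtrace ((Wm V * P * adj (Wm V)) * Cmat)) = Re (mtrace (P * Cmat))"
proof -
  have V: "V \<in> carrier_mat 2 2" and VV: "adj V * V = 1\<^sub>m 2" using U unfolding unitary2_def by auto
  have Pc: "P \<in> carrier_mat 4 4" using couplings_carrier[OF P] .
  have WW: "adj (Wm V) * Wm V = 1\<^sub>m 4" using Wm_unitary[OF V VV] .
  from P have den: "psd 4 P" "mtrace P = 1" and pd: "ptr_dual P = \<omega>" and ph: "ptr_H P = transpose_mat \<rho>"
    unfolding couplings_def density_def by auto
  have tr: "mtrace (Wm V * P * adj (Wm V)) = mtrace P" using gen_unitary_trace[OF Wm_carrier WW Pc] .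
  show "Wm V * P * adj (Wm V) \<in> couplings (unitary_conj V \<rho>) (unitary_conj V \<omega>)"
    unfolding couplings_def density_def
    using psd_conj[OF den(1) Wm_carrier, of V] tr den(2)
      ptr_dual_Wu[OF Pc V VV] ptr_H_Wu[OF Pc V VV] pd ph transpose_uconj[OF V R]
    by (simp add: unitary_conj_def)
  have C2: "Wm V * P * adj (Wm V) \<in> carrier_mat 4 4" using Pc by auto
  have "bil 4 (Wm V * P * adj (Wm V)) fvec fvec = bil 4 P fvec fvec"
    using bil_conj[OF Pc Wm_carrier fvec_carrier fvec_carrier] Wm_fvec[OF V VV] by simp
  then show "Re (mtrace ((Wm V * P * adj (Wm V)) * Cmat)) = Re (mtrace (P * Cmat))"
    unfolding trace_cost_bil[OF C2] trace_cost_bil[OF Pc] tr by simp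
qed

lemma unitary_adj: "unitary2 V \<Longrightarrow> unitary2 (adj V)"
  unfolding unitary2_def by (auto simp: adj_adj)

lemma uconj_back: assumes U: "unitary2 V" and R: "\<rho> \<in> carrier_mat 2 2"
  shows "unitary_conj (adj V) (unitary_conj V \<rho>) = \<rho>"
proof -
  have V: "V \<in> carrier_mat 2 2" and VV: "adj V * V = 1\<^sub>m 2" using U unfolding unitary2_def by auto
  have AV: "adj V \<in> carrier_mat 2 2" using V by simp
  have s1: "V * \<rho> * adj V = V * (\<rho> * adj V)" using V R AV by (rule assoc_mult_mat)
  have "adj V * (V * (\<rho> * adj V)) = (adj V * V) * (\<rho> * adj V)"
    using AV V R by (metis assoc_mult_mat mult_carrier_mat)
  also have "\<dots> = \<rho> * adj V" using VV R AV by simp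
  finally have s2: "adj V * (V * \<rho> * adj V) = \<rho> * adj V" using s1 by simp
  have "(\<rho> * adj V) * V = \<rho> * (adj V * V)" using R AV V by (rule assoc_mult_mat)
  also have "\<dots> = \<rho>" using VV R by simp
  finally show ?thesis unfolding unitary_conj_def adj_adj s2 .
qed

lemma uconj_carrier: "unitary2 V \<Longrightarrow> \<rho> \<in> carrier_mat 2 2 \<Longrightarrow> unitary_conj V \<rho> \<in> carrier_mat 2 2"
  unfolding unitary2_def unitary_conj_def by auto

lemma QW2_image_sub:
  assumes U: "unitary2 V" and R: "\<rho> \<in> carrier_mat 2 2" and O: "\<omega> \<in> carrier_mat 2 2"
  shows "(\<lambda>P. Re (mtrace (P * Cmat))) ` couplings \<rho> \<omega> \<subseteq>
         (\<lambda>P. Re (mtrace (P * Cmat))) ` couplings (unitary_conj V \<rho>) (unitary_conj V \<omega>)"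
proof
  fix x assume "x \<in> (\<lambda>P. Re (mtrace (P * Cmat))) ` couplings \<rho> \<omega>"
  then obtain P where P: "P \<in> couplings \<rho> \<omega>" and x: "x = Re (mtrace (P * Cmat))" by blast
  show "x \<in> (\<lambda>P. Re (mtrace (P * Cmat))) ` couplings (unitary_conj V \<rho>) (unitary_conj V \<omega>)"
    using coupling_uconj[OF U R O P] x by (metis image_eqI)
qed

lemma QW2_uconj:
  assumes U: "unitary2 V" and R: "\<rho> \<in> carrier_mat 2 2" and O: "\<omega> \<in> carrier_mat 2 2"
  shows "QW2 [sigma1, sigma2, sigma3] (unitary_conj V \<rho>) (unitary_conj V \<omega>) = QW2 [sigma1, sigma2, sigma3] \<rho> \<omega>"
proof -
  have "(\<lambda>P. Re (mtrace (P * Cmat))) ` couplings \<rho> \<omega> =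
         (\<lambda>P. Re (mtrace (P * Cmat))) ` couplings (unitary_conj V \<rho>) (unitary_conj V \<omega>)"
  proof
    show "(\<lambda>P. Re (mtrace (P * Cmat))) ` couplings \<rho> \<omega> \<subseteq> (\<lambda>P. Re (mtrace (P * Cmat))) ` couplings (unitary_conj V \<rho>) (unitary_conj V \<omega>)"
      by (rule QW2_image_sub[OF U R O])
    show "(\<lambda>P. Re (mtrace (P * Cmat))) ` couplings (unitary_conj V \<rho>) (unitary_conj V \<omega>) \<subseteq> (\<lambda>P. Re (mtrace (P * Cmat))) ` couplings \<rho> \<omega>"
      using QW2_image_sub[OF unitary_adj[OF U] uconj_carrier[OF U R] uconj_carrier[OF U O]]
      unfolding uconj_back[OF U R] uconj_back[OF U O] .
  qed
  thus ?thesis unfolding QW2_def cost_eq by simp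
qed

lemma ptr_dual_cconj: "ptr_dual (cconj P) = cconj (ptr_dual P)" if "P \<in> carrier_mat 4 4"
  using that by (intro eq_matI) (auto simp: ptr_dual_def cconj_def)

lemma ptr_H_cconj: "ptr_H (cconj P) = cconj (ptr_H P)" if "P \<in> carrier_mat 4 4"
  using that by (intro eq_matI) (auto simp: ptr_H_def cconj_def)

lemma transpose_cconj: "transpose_mat (cconj A) = cconj (transpose_mat A)"
  by (intro eq_matI) (auto simp: cconj_def)

lemma coupling_cconj:
  assumes P: "P \<in> couplings \<rho> \<omega>"
  shows "cconj P \<in> couplings (cconj \<rho>) (cconj \<omega>)" "Re (mtrace (cconj P * Cmat)) = Re (mtrace (P * Cmat))"
proof -
  have Pc: "P \<in> carrier_mat 4 4" using couplings_carrier[OF P] .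
  from P have den: "psd 4 P" "mtrace P = 1" and pd: "ptr_dual P = \<omega>" and ph: "ptr_H P = transpose_mat \<rho>"
    unfolding couplings_def density_def by auto
  show "cconj P \<in> couplings (cconj \<rho>) (cconj \<omega>)"
    unfolding couplings_def density_def
    using psd_cconj[OF den(1)] mtrace_cconj[OF Pc] den(2) ptr_dual_cconj[OF Pc] ptr_H_cconj[OF Pc] pd ph
    by (simp add: transpose_cconj)
  show "Re (mtrace (cconj P * Cmat)) = Re (mtrace (P * Cmat))"
    using Pc unfolding trace_cost[OF Pc] by (subst trace_cost) (auto simp: mtrace_cconj)
qed

lemma QW2_cconj:
  shows "QW2 [sigma1, sigma2, sigma3] (cconj \<rho>) (cconj \<omega>) = QW2 [sigma1, sigma2, sigma3] \<rho> \<omega>"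
proof -
  have sub: "(\<lambda>P. Re (mtrace (P * Cmat))) ` couplings r w \<subseteq>
         (\<lambda>P. Re (mtrace (P * Cmat))) ` couplings (cconj r) (cconj w)" for r w
  proof
    fix x assume "x \<in> (\<lambda>P. Re (mtrace (P * Cmat))) ` couplings r w"
    then obtain P where P: "P \<in> couplings r w" and x: "x = Re (mtrace (P * Cmat))" by blast
    show "x \<in> (\<lambda>P. Re (mtrace (P * Cmat))) ` couplings (cconj r) (cconj w)"
      using coupling_cconj[OF P] x by (metis image_eqI)
  qed
  have "(\<lambda>P. Re (mtrace (P * Cmat))) ` couplings \<rho> \<omega> =
         (\<lambda>P. Re (mtrace (P * Cmat))) ` couplings (cconj \<rho>) (cconj \<omega>)"
    using sub[of \<rho> \<omega>] sub[of "cconj \<rho>" "cconj \<omega>"] by (simp add: cconj_cconj)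
  thus ?thesis unfolding QW2_def cost_eq by simp
qed

lemma dsym_uconj: "unitary2 V \<Longrightarrow> \<rho> \<in> carrier_mat 2 2 \<Longrightarrow> \<omega> \<in> carrier_mat 2 2 \<Longrightarrow>
   d_sym (unitary_conj V \<rho>) (unitary_conj V \<omega>) = d_sym \<rho> \<omega>"
  unfolding d_sym_def QWdiv_def by (simp add: QW2_uconj)

lemma dsym_cconj: "d_sym (cconj \<rho>) (cconj \<omega>) = d_sym \<rho> \<omega>"
  unfolding d_sym_def QWdiv_def by (simp add: QW2_cconj)

lemma dsym_aconj: "unitary2 V \<Longrightarrow> \<rho> \<in> carrier_mat 2 2 \<Longrightarrow> \<omega> \<in> carrier_mat 2 2 \<Longrightarrow>
   d_sym (antiunitary_conj V \<rho>) (antiunitary_conj V \<omega>) = d_sym \<rho> \<omega>"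
  unfolding antiunitary_conj_def unitary_conj_def[symmetric]
  by (simp add: dsym_uconj dsym_cconj)



definition pm :: "complex \<Rightarrow> complex \<Rightarrow> complex mat" where
  "pm a0 a1 = mat 2 2 (\<lambda>(i,j). (if i = 0 then a0 else a1) * cnj (if j = 0 then a0 else a1))"

definition hm :: "real \<Rightarrow> complex \<Rightarrow> complex mat" where
  "hm p z = mat 2 2 (\<lambda>(i,j). if i = 0 then (if j = 0 then complex_of_real p else z)
                              else (if j = 0 then cnj z else complex_of_real (1 - p)))"

definition TT :: "complex mat \<Rightarrow> complex mat \<Rightarrow> real" where "TT A B = Re (mtrace (A * B))"

definition P0 :: "complex mat" where "P0 = mat 2 2 (\<lambda>(i,j). if i = 0 \<and> j = 0 then 1 else 0)"
definition P1 :: "complex mat" where "P1 = mat 2 2 (\<lambda>(i,j). if i = 1 \<and> j = 1 then 1 else 0)"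
definition Pp :: "complex mat" where "Pp = mat 2 2 (\<lambda>(i,j). 1/2)"
definition Pi :: "complex mat" where
  "Pi = mat 2 2 (\<lambda>(i,j). if i = j then 1/2 else if i = 0 then -\<i>/2 else \<i>/2)"

lemma pm_pure: "a0 * cnj a0 + a1 * cnj a1 = 1 \<Longrightarrow> pm a0 a1 \<in> pure2"
proof -
  assume n: "a0 * cnj a0 + a1 * cnj a1 = 1"
  let ?v = "vec 2 (\<lambda>i. if i = 0 then a0 else a1)"
  have "complex_of_real (cmod a0 ^ 2 + cmod a1 ^ 2) = 1" using n by (simp only: of_real_add complex_norm_square)
  hence h: "cmod a0 ^ 2 + cmod a1 ^ 2 = 1" by (metis of_real_eq_1_iff)
  have "(\<Sum>i<2. cmod (?v $ i)^2) = 1" using h by (simp add: sum2)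
  moreover have "pm a0 a1 = mat 2 2 (\<lambda>(i,j). ?v $ i * cnj (?v $ j))"
    unfolding pm_def by (rule eq_matI) auto
  ultimately show ?thesis unfolding pure2_def by (intro CollectI bexI[of _ ?v]) auto
qed


lemma pure_pm: assumes "\<sigma> \<in> pure2" obtains a0 a1 where "a0 * cnj a0 + a1 * cnj a1 = 1" "\<sigma> = pm a0 a1"
  using pure_unfold[OF assms] unfolding pm_def by blast

lemma pm_carrier[simp]: "pm a0 a1 \<in> carrier_mat 2 2" by (simp add: pm_def)
lemma hm_carrier[simp]: "hm p z \<in> carrier_mat 2 2" by (simp add: hm_def)

lemma mtrace_pm_pm: "mtrace (pm a0 a1 * pm b0 b1) =
   (cnj a0 * b0 + cnj a1 * b1) * cnj (cnj a0 * b0 + cnj a1 * b1)"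
  by (simp add: mtrace_def pm_def scalar_prod_def sum2 sum2' algebra_simps)

lemma TT_pm_pm: "TT (pm a0 a1) (pm b0 b1) = (cmod (cnj a0 * b0 + cnj a1 * b1))^2"
  unfolding TT_def mtrace_pm_pm by (simp add: complex_norm_square[symmetric] del: complex_cnj_add complex_cnj_mult)

lemma pm_state: assumes "a0 * cnj a0 + a1 * cnj a1 = 1" shows "pm a0 a1 \<in> states2"
proof -
  have "mtrace (pm a0 a1) = 1" using assms by (simp add: mtrace_def pm_def sum2)
  moreover have "psd 2 (pm a0 a1)" unfolding psd_bil
  proof (intro conjI ballI)
    show "pm a0 a1 \<in> carrier_mat 2 2" by simp
    fix v :: "complex vec" assume "v \<in> carrier_vec 2"
    let ?z = "cnj (v$0) * a0 + cnj (v$1) * a1"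
    have "bil 2 (pm a0 a1) v v = ?z * cnj ?z" by (simp add: bil_def pm_def sum2 algebra_simps)
    also have "\<dots> = complex_of_real ((cmod ?z)^2)" by (rule complex_norm_square[symmetric])
    finally show "Im (bil 2 (pm a0 a1) v v) = 0" "Re (bil 2 (pm a0 a1) v v) \<ge> 0" by simp_all
  qed
  ultimately show ?thesis unfolding states2_def density_def by simp
qed

lemma pure_state: "\<sigma> \<in> pure2 \<Longrightarrow> \<sigma> \<in> states2"
  by (metis pure_pm pm_state)

lemma pure_TT_self: "\<sigma> \<in> pure2 \<Longrightarrow> TT \<sigma> \<sigma> = 1"
proof -
  assume "\<sigma> \<in> pure2"
  then obtain a0 a1 where n: "a0 * cnj a0 + a1 * cnj a1 = 1" and s: "\<sigma> = pm a0 a1" by (rule pure_pm)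
  have "cnj a0 * a0 + cnj a1 * a1 = 1" using n by (simp add: mult.commute)
  hence "(cmod (cnj a0 * a0 + cnj a1 * a1))^2 = 1" by simp
  thus ?thesis unfolding s TT_pm_pm .
qed

lemma P0_pm: "P0 = pm 1 0" by (rule eq_matI) (auto simp: P0_def pm_def)
lemma P1_pm: "P1 = pm 0 1" by (rule eq_matI) (auto simp: P1_def pm_def)

definition sq :: complex where "sq = complex_of_real (sqrt 2 / 2)"
lemma sq_sq: "sq * sq = 1/2" "cnj sq = sq"
proof -
  have "sqrt 2 / 2 * (sqrt 2 / 2) = (1/2::real)" by (simp add: field_simps)
  hence "complex_of_real (sqrt 2 / 2 * (sqrt 2 / 2)) = 1/2" by simp
  thus "sq * sq = 1/2" unfolding sq_def of_real_mult by simp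
  show "cnj sq = sq" by (simp add: sq_def)
qed

lemma sqq: "sq * (sq * c) = c / 2" using sq_sq(1) by (metis mult.assoc mult.commute times_divide_eq_right mult_1)

lemma isq: "\<i> * sq * (\<i> * sq) = -1/2"
proof -
  have "\<i> * sq * (\<i> * sq) = (\<i> * \<i>) * (sq * sq)" by (simp only: mult_ac)
  thus ?thesis by (simp add: sq_sq)
qed

lemma Pp_pm: "Pp = pm sq sq" by (rule eq_matI) (auto simp: Pp_def pm_def sq_sq)
lemma Pi_pm: "Pi = pm sq (\<i> * sq)"
proof -
  have e: "sq * (- \<i> * sq) = -\<i>/2" "\<i> * sq * sq = \<i>/2" "\<i> * sq * (- \<i> * sq) = 1/2"
    using sq_sq(1) by (simp_all add: algebra_simps)
  show ?thesis by (rule eq_matI) (auto simp: Pi_def pm_def sq_sq sqq isq)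
qed

lemma P0_pure: "P0 \<in> pure2" unfolding P0_pm by (rule pm_pure) simp
lemma P1_pure: "P1 \<in> pure2" unfolding P1_pm by (rule pm_pure) simp
lemma Pp_pure: "Pp \<in> pure2" unfolding Pp_pm by (rule pm_pure) (simp add: sq_sq)
lemma Pi_pure: "Pi \<in> pure2" unfolding Pi_pm by (rule pm_pure) (simp add: sq_sq sqq isq)



definition vf :: "complex \<Rightarrow> complex \<Rightarrow> nat \<Rightarrow> complex" where "vf a0 a1 i = (if i = 0 then a0 else a1)"

lemma pm_vf: "pm a0 a1 = mat 2 2 (\<lambda>(i,j). vf a0 a1 i * cnj (vf a0 a1 j))"
  by (simp add: pm_def vf_def)

lemma completeness:
  assumes nc: "c0*cnj c0 + c1*cnj c1 = 1" and nb: "b0*cnj b0 + b1*cnj b1 = 1"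
    and orth: "cnj c0*b0 + cnj c1*b1 = 0" and ij: "i < 2" "j < 2"
  shows "vf c0 c1 i * cnj (vf c0 c1 j) + vf b0 b1 i * cnj (vf b0 b1 j) = (if i = j then 1 else 0)"
proof -
  define A where "A = mat 2 2 (\<lambda>(i,j). if j = 0 then vf c0 c1 i else vf b0 b1 i)"
  have Ac: "A \<in> carrier_mat 2 2" by (simp add: A_def)
  have orth': "cnj b0*c0 + cnj b1*c1 = 0" using arg_cong[OF orth, of cnj] by (simp add: mult.commute)
  have "adj A * A = 1\<^sub>m 2"
    apply (rule mat2_ext) using Ac apply (metis adj_carrier mult_carrier_mat) apply simp
    using nc nb orth orth' by (auto simp: A_def vf_def scalar_prod_def sum2' mult.commute)
  hence "A * adj A = 1\<^sub>m 2" using mat_mult_left_right_inverse[of "adj A" 2 A] Ac by auto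
  hence "(A * adj A) $$ (i,j) = (if i = j then 1 else 0)" using ij by simp
  thus ?thesis using ij Ac by (simp add: A_def scalar_prod_def sum2')
qed

lemma V_construct:
  assumes nc: "c0*cnj c0 + c1*cnj c1 = 1" and nb: "b0*cnj b0 + b1*cnj b1 = 1"
    and orth: "cnj c0*b0 + cnj c1*b1 = 0"
    and nu: "u * cnj u = 1" and nw: "w * cnj w = 1"
  defines "VV \<equiv> mat 2 2 (\<lambda>(i,j). if j = 0 then u * vf c0 c1 i else w * vf b0 b1 i)"
  shows "unitary2 VV"
    "unitary_conj VV P0 = pm c0 c1" "unitary_conj VV P1 = pm b0 b1"
    "unitary_conj VV Pp = pm (sq * (u*c0 + w*b0)) (sq * (u*c1 + w*b1))"
proof -
  let ?V = VV
  note [simp] = VV_def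
  have Vc: "?V \<in> carrier_mat 2 2" by (simp add: VV_def)
  have comp: "vf c0 c1 i * cnj (vf c0 c1 j) + vf b0 b1 i * cnj (vf b0 b1 j) = (if i = j then 1 else 0)"
    if "i < 2" "j < 2" for i j using completeness[OF nc nb orth that] .
  have orth': "cnj b0*c0 + cnj b1*c1 = 0" using arg_cong[OF orth, of cnj] by (simp add: mult.commute)
  have VV1: "adj ?V * ?V = 1\<^sub>m 2"
  proof (rule mat2_ext)
    show "adj ?V * ?V \<in> carrier_mat 2 2" "1\<^sub>m 2 \<in> carrier_mat 2 2" using Vc by (metis adj_carrier mult_carrier_mat) simp
    have e: "(adj ?V * ?V) $$ (0,0) = (u * cnj u) * (c0*cnj c0 + c1*cnj c1)"
            "(adj ?V * ?V) $$ (0,1) = (cnj u * w) * (cnj c0*b0 + cnj c1*b1)"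
            "(adj ?V * ?V) $$ (1,0) = (cnj w * u) * (cnj b0*c0 + cnj b1*c1)"
            "(adj ?V * ?V) $$ (1,1) = (w * cnj w) * (b0*cnj b0 + b1*cnj b1)"
      by (simp_all add: scalar_prod_def sum2' vf_def algebra_simps)
    show "\<forall>i\<in>{0, 1}. \<forall>j\<in>{0, 1}. (adj ?V * ?V) $$ (i, j) = 1\<^sub>m 2 $$ (i, j)"
      using e nc nb orth orth' nu nw by simp
  qed
  have VV2: "?V * adj ?V = 1\<^sub>m 2"
  proof (rule eq_matI)
    fix i j assume "i < dim_row (1\<^sub>m 2)" "j < dim_col (1\<^sub>m 2)"
    hence ij: "i < 2" "j < 2" by auto
    have "(?V * adj ?V) $$ (i,j) = (u * cnj u) * (vf c0 c1 i * cnj (vf c0 c1 j)) + (w * cnj w) * (vf b0 b1 i * cnj (vf b0 b1 j))"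
      using ij by (simp add: scalar_prod_def sum2' algebra_simps)
    also have "\<dots> = 1\<^sub>m 2 $$ (i,j)" using comp[OF ij] ij nu nw by simp
    finally show "(?V * adj ?V) $$ (i,j) = 1\<^sub>m 2 $$ (i,j)" .
  qed auto
  show "unitary2 ?V" unfolding unitary2_def using VV1 VV2 Vc by simp
  show "unitary_conj ?V P0 = pm c0 c1"
    unfolding unitary_conj_def pm_vf
  proof (rule eq_matI)
    fix i j assume "i < dim_row (mat 2 2 (\<lambda>(i, j). vf c0 c1 i * cnj (vf c0 c1 j)))"
        "j < dim_col (mat 2 2 (\<lambda>(i, j). vf c0 c1 i * cnj (vf c0 c1 j)))"
    hence ij: "i < 2" "j < 2" by auto
    have P0c: "P0 \<in> carrier_mat 2 2" by (simp add: P0_def)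
    have "(?V * P0 * adj ?V) $$ (i,j) = (u * cnj u) * (vf c0 c1 i * cnj (vf c0 c1 j))"
      unfolding conj3_index[OF P0c Vc ij] using ij by (simp add: sum2 P0_def algebra_simps)
    thus "(?V * P0 * adj ?V) $$ (i,j) = mat 2 2 (\<lambda>(i, j). vf c0 c1 i * cnj (vf c0 c1 j)) $$ (i,j)"
      using ij nu by simp
  qed (auto simp: P0_def)
  show "unitary_conj VV P1 = pm b0 b1"
    unfolding unitary_conj_def pm_vf
  proof (rule eq_matI)
    fix i j assume "i < dim_row (mat 2 2 (\<lambda>(i, j). vf b0 b1 i * cnj (vf b0 b1 j)))"
        "j < dim_col (mat 2 2 (\<lambda>(i, j). vf b0 b1 i * cnj (vf b0 b1 j)))"
    hence ij: "i < 2" "j < 2" by auto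
    have P1c: "P1 \<in> carrier_mat 2 2" by (simp add: P1_def)
    have "(?V * P1 * adj ?V) $$ (i,j) = (w * cnj w) * (vf b0 b1 i * cnj (vf b0 b1 j))"
      unfolding conj3_index[OF P1c Vc ij] using ij by (simp add: sum2 P1_def algebra_simps)
    thus "(?V * P1 * adj ?V) $$ (i,j) = mat 2 2 (\<lambda>(i, j). vf b0 b1 i * cnj (vf b0 b1 j)) $$ (i,j)"
      using ij nw by simp
  qed (auto simp: P1_def)
  show "unitary_conj ?V Pp = pm (sq * (u*c0 + w*b0)) (sq * (u*c1 + w*b1))"
    unfolding unitary_conj_def pm_vf
  proof (rule eq_matI)
    let ?x0 = "sq * (u*c0 + w*b0)" and ?x1 = "sq * (u*c1 + w*b1)"
    fix i j assume "i < dim_row (mat 2 2 (\<lambda>(i, j). vf ?x0 ?x1 i * cnj (vf ?x0 ?x1 j)))"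
        "j < dim_col (mat 2 2 (\<lambda>(i, j). vf ?x0 ?x1 i * cnj (vf ?x0 ?x1 j)))"
    hence ij: "i < 2" "j < 2" by auto
    have Ppc: "Pp \<in> carrier_mat 2 2" by (simp add: Pp_def)
    have "(?V * Pp * adj ?V) $$ (i,j) = (1/2) * ((u * vf c0 c1 i + w * vf b0 b1 i) * cnj (u * vf c0 c1 j + w * vf b0 b1 j))"
      unfolding conj3_index[OF Ppc Vc ij] using ij by (simp add: sum2 Pp_def algebra_simps)
    also have "\<dots> = vf ?x0 ?x1 i * cnj (vf ?x0 ?x1 j)"
      using ij by (auto simp: vf_def algebra_simps sqq sq_sq(2))
    finally show "(?V * Pp * adj ?V) $$ (i,j) = mat 2 2 (\<lambda>(i, j). vf ?x0 ?x1 i * cnj (vf ?x0 ?x1 j)) $$ (i,j)"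
      using ij by simp
  qed (auto simp: Pp_def)
qed



lemma state_hm: assumes "\<rho> \<in> states2" obtains p z where "\<rho> = hm p z"
proof -
  have R: "\<rho> \<in> carrier_mat 2 2" using states_carrier[OF assms] .
  have tr: "\<rho>$$(0,0) + \<rho>$$(1,1) = 1" using states_trace[OF assms] .
  let ?v1 = "vec 2 (\<lambda>i. if i = 0 then 1 else 0 :: complex)"
  let ?v2 = "vec 2 (\<lambda>i. if i = 0 then 0 else 1 :: complex)"
  let ?v3 = "vec 2 (\<lambda>i. 1 :: complex)"
  let ?v4 = "vec 2 (\<lambda>i. if i = 0 then 1 else \<i>)"
  have "Im (bil 2 \<rho> ?v1 ?v1) = 0" using states_psd[OF assms] by simp
  hence h1: "Im (\<rho>$$(0,0)) = 0" by (simp add: bil_def sum2)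
  have "Im (bil 2 \<rho> ?v2 ?v2) = 0" using states_psd[OF assms] by simp
  hence h2: "Im (\<rho>$$(1,1)) = 0" by (simp add: bil_def sum2)
  have "Im (bil 2 \<rho> ?v3 ?v3) = 0" using states_psd[OF assms] by simp
  hence h3: "Im (\<rho>$$(0,1)) + Im (\<rho>$$(1,0)) = 0" using h1 h2 by (simp add: bil_def sum2)
  have "Im (bil 2 \<rho> ?v4 ?v4) = 0" using states_psd[OF assms] by simp
  hence h4: "Re (\<rho>$$(0,1)) - Re (\<rho>$$(1,0)) = 0" using h1 h2 by (simp add: bil_def sum2)
  have e10: "\<rho>$$(1,0) = cnj (\<rho>$$(0,1))" using h3 h4 by (simp add: complex_eq_iff)
  have e00: "\<rho>$$(0,0) = complex_of_real (Re (\<rho>$$(0,0)))" using h1 by (simp add: complex_eq_iff)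
  have e11: "\<rho>$$(1,1) = complex_of_real (1 - Re (\<rho>$$(0,0)))" using h2 tr by (simp add: complex_eq_iff)
  have "\<rho> = hm (Re (\<rho>$$(0,0))) (\<rho>$$(0,1))"
    apply (rule mat2_ext[OF R hm_carrier])
    using e10 e00 e11 by (simp add: hm_def)
  thus ?thesis using that by blast
qed

lemma hm_state_hermitian: "hm p z $$ (0,0) = complex_of_real p" by (simp add: hm_def)

lemma TT_hm_P0: "TT (hm p z) P0 = p"
  by (simp add: TT_def mtrace_def hm_def P0_def scalar_prod_def sum2 sum2')
lemma TT_hm_P1: "TT (hm p z) P1 = 1 - p"
  by (simp add: TT_def mtrace_def hm_def P1_def scalar_prod_def sum2 sum2')
lemma TT_hm_Pp: "TT (hm p z) Pp = 1/2 + Re z"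
  by (simp add: TT_def mtrace_def hm_def Pp_def scalar_prod_def sum2 sum2' field_simps)
lemma TT_hm_Pi: "TT (hm p z) Pi = 1/2 - Im z"
  by (simp add: TT_def mtrace_def hm_def Pi_def scalar_prod_def sum2 sum2' field_simps)
lemma TT_hm_hm: "TT (hm p z) (hm q w) = p*q + (1-p)*(1-q) + 2 * (Re z * Re w + Im z * Im w)"
  by (simp add: TT_def mtrace_def hm_def scalar_prod_def sum2 sum2' algebra_simps)

lemma TT_uconj:
  assumes U: "unitary2 U" and A: "A \<in> carrier_mat 2 2" and B: "B \<in> carrier_mat 2 2"
  shows "TT (unitary_conj U A) (unitary_conj U B) = TT A B"
proof -
  have Uc: "U \<in> carrier_mat 2 2" and UU: "adj U * U = 1\<^sub>m 2" using U unfolding unitary2_def by auto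
  have AU: "adj U \<in> carrier_mat 2 2" using Uc by simp
  have s: "adj U * (U * Z) = Z" if "Z \<in> carrier_mat 2 2" for Z
  proof -
    have "adj U * (U * Z) = (adj U * U) * Z" using AU Uc that by (metis assoc_mult_mat)
    thus ?thesis using UU that by simp
  qed
  have "U * A * adj U * (U * B * adj U) = U * (A * (adj U * (U * (B * adj U))))"
    using Uc A B AU by (simp add: assoc_mult_mat[of _ 2 2 _ 2 _ 2])
  also have "\<dots> = U * (A * (B * adj U))" using s[of "B * adj U"] B AU by simp
  also have "\<dots> = U * (A * B) * adj U" using Uc A B AU by (simp add: assoc_mult_mat[of _ 2 2 _ 2 _ 2])
  finally have "U * A * adj U * (U * B * adj U) = U * (A * B) * adj U" .
  thus ?thesis unfolding TT_def unitary_conj_def using U A B unitary_trace[OF U, of "A*B"] by simp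
qed



lemma P0_hm: "P0 = hm 1 0" by (rule eq_matI) (auto simp: P0_def hm_def)
lemma P1_hm: "P1 = hm 0 0" by (rule eq_matI) (auto simp: P1_def hm_def)
lemma Pp_hm: "Pp = hm (1/2) (1/2)" by (rule eq_matI) (auto simp: Pp_def hm_def)
lemma Pi_hm: "Pi = hm (1/2) (-\<i>/2)" by (rule eq_matI) (auto simp: Pi_def hm_def)
lemma cconj_hm: "cconj (hm p z) = hm p (cnj z)" by (rule eq_matI) (auto simp: hm_def cconj_def)

lemma TT_add: assumes "X \<in> carrier_mat 2 2" "A \<in> carrier_mat 2 2" "B \<in> carrier_mat 2 2"
  shows "TT X (A + B) = TT X A + TT X B"
  using assms by (simp add: TT_def mtrace_def scalar_prod_def sum2 sum2' algebra_simps)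

lemma TT_hm_one: "TT (hm p z) (1\<^sub>m 2) = 1"
  by (simp add: TT_def mtrace_def hm_def scalar_prod_def sum2 sum2')

lemma pm_complete:
  assumes nc: "c0*cnj c0 + c1*cnj c1 = 1" and nb: "b0*cnj b0 + b1*cnj b1 = 1"
    and orth: "cnj c0*b0 + cnj c1*b1 = 0"
  shows "pm c0 c1 + pm b0 b1 = 1\<^sub>m 2"
proof (rule eq_matI)
  fix i j assume "i < dim_row (1\<^sub>m 2)" "j < dim_col (1\<^sub>m 2)"
  hence ij: "i < 2" "j < 2" by auto
  show "(pm c0 c1 + pm b0 b1) $$ (i,j) = 1\<^sub>m 2 $$ (i,j)"
    using completeness[OF nc nb orth ij] ij by (simp add: pm_vf)
qed (auto simp: pm_def)

lemma forward:
  fixes \<Phi> :: "complex mat \<Rightarrow> complex mat"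
  assumes H1: "\<forall>\<rho> \<in> states2. \<Phi> \<rho> \<in> states2"
    and H2: "\<forall>\<rho> \<in> states2. \<forall>\<omega> \<in> states2. d_sym (\<Phi> \<rho>) (\<Phi> \<omega>) = d_sym \<rho> \<omega>"
    and H3: "\<forall>\<rho> \<in> pure2. \<Phi> \<rho> \<in> pure2"
  shows "\<exists>V. unitary2 V \<and> ((\<forall>\<rho> \<in> states2. \<Phi> \<rho> = unitary_conj V \<rho>) \<or>
                  (\<forall>\<rho> \<in> states2. \<Phi> \<rho> = antiunitary_conj V \<rho>))"
proof -
  define Q where "Q \<rho> = QW2 [sigma1, sigma2, sigma3] \<rho> \<rho>" for \<rho>
  have QWp: "QW2 [sigma1, sigma2, sigma3] \<rho> \<sigma> = 8 - 4 * TT \<rho> \<sigma>" if "\<rho> \<in> states2" "\<sigma> \<in> pure2" for \<rho> \<sigma>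
    using QW2_pure[OF that] by (simp add: TT_def)
  have Qp: "Q \<sigma> = 4" if "\<sigma> \<in> pure2" for \<sigma>
    using QWp[OF pure_state[OF that] that] pure_TT_self[OF that] by (simp add: Q_def)
  have A: "8 * TT (\<Phi> \<rho>) (\<Phi> \<sigma>) = 8 * TT \<rho> \<sigma> + Q \<rho> - Q (\<Phi> \<rho>)" if r: "\<rho> \<in> states2" and s: "\<sigma> \<in> pure2" for \<rho> \<sigma>
  proof -
    have s': "\<sigma> \<in> states2" using pure_state[OF s] .
    have fs: "\<Phi> \<sigma> \<in> pure2" using H3 s by blast
    have fr: "\<Phi> \<rho> \<in> states2" using H1 r by blast
    have "d_sym (\<Phi> \<rho>) (\<Phi> \<sigma>) = d_sym \<rho> \<sigma>" using H2 r s' by blast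
    hence "QW2 [sigma1, sigma2, sigma3] (\<Phi> \<rho>) (\<Phi> \<sigma>) - (Q (\<Phi> \<rho>) + Q (\<Phi> \<sigma>)) / 2 =
           QW2 [sigma1, sigma2, sigma3] \<rho> \<sigma> - (Q \<rho> + Q \<sigma>) / 2"
      unfolding d_sym_def QWdiv_def Q_def by simp
    thus ?thesis unfolding QWp[OF fr fs] QWp[OF r s] Qp[OF fs] Qp[OF s] by (simp add: field_simps)
  qed
  have B: "Q \<sigma> = Q (\<Phi> \<sigma>)" if s: "\<sigma> \<in> pure2" for \<sigma>
    using A[OF pure_state[OF s] s] pure_TT_self[OF s] pure_TT_self[of "\<Phi> \<sigma>"] H3 s by auto
  have C: "TT (\<Phi> \<sigma>) (\<Phi> \<tau>) = TT \<sigma> \<tau>" if "\<sigma> \<in> pure2" "\<tau> \<in> pure2" for \<sigma> \<tau>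
    using A[OF pure_state[OF that(1)] that(2)] B[OF that(1)] by simp
  obtain c0 c1 where nc: "c0 * cnj c0 + c1 * cnj c1 = 1" and fP0: "\<Phi> P0 = pm c0 c1"
    using H3 P0_pure pure_pm by metis
  obtain b0 b1 where nb: "b0 * cnj b0 + b1 * cnj b1 = 1" and fP1: "\<Phi> P1 = pm b0 b1"
    using H3 P1_pure pure_pm by metis
  have "TT (\<Phi> P0) (\<Phi> P1) = TT P0 P1" using C P0_pure P1_pure by blast
  also have "TT P0 P1 = 0" unfolding P0_hm P1_hm TT_hm_hm by simp
  finally have "(cmod (cnj c0 * b0 + cnj c1 * b1))^2 = 0" unfolding fP0 fP1 TT_pm_pm .
  hence orth: "cnj c0 * b0 + cnj c1 * b1 = 0" by simp
  have F: "TT (\<Phi> \<rho>) (\<Phi> \<sigma>) = TT \<rho> \<sigma>" if r: "\<rho> \<in> states2" and s: "\<sigma> \<in> pure2" for \<rho> \<sigma>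
  proof -
    have fr: "\<Phi> \<rho> \<in> states2" using H1 r by blast
    obtain p z where fz: "\<Phi> \<rho> = hm p z" using state_hm[OF fr] .
    obtain q w where rz: "\<rho> = hm q w" using state_hm[OF r] .
    have "TT (\<Phi> \<rho>) (\<Phi> P0) + TT (\<Phi> \<rho>) (\<Phi> P1) = TT (\<Phi> \<rho>) (pm c0 c1 + pm b0 b1)"
      unfolding fP0 fP1 fz by (rule TT_add[symmetric]) auto
    also have "\<dots> = 1" unfolding pm_complete[OF nc nb orth] fz by (rule TT_hm_one)
    finally have e1: "TT (\<Phi> \<rho>) (\<Phi> P0) + TT (\<Phi> \<rho>) (\<Phi> P1) = 1" .
    have e2: "TT \<rho> P0 + TT \<rho> P1 = 1" unfolding rz TT_hm_P0 TT_hm_P1 by simp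
    have "Q \<rho> = Q (\<Phi> \<rho>)" using A[OF r P0_pure] A[OF r P1_pure] e1 e2 by simp
    thus ?thesis using A[OF r s] by simp
  qed
  obtain x0 x1 where nx: "x0 * cnj x0 + x1 * cnj x1 = 1" and fPp: "\<Phi> Pp = pm x0 x1"
    using H3 Pp_pure pure_pm by metis
  define \<alpha> where "\<alpha> = cnj c0 * x0 + cnj c1 * x1"
  define \<beta> where "\<beta> = cnj b0 * x0 + cnj b1 * x1"
  have "TT (\<Phi> P0) (\<Phi> Pp) = TT P0 Pp" using C P0_pure Pp_pure by blast
  also have "TT P0 Pp = 1/2" unfolding P0_hm Pp_hm TT_hm_hm by simp
  finally have "(cmod \<alpha>)^2 = 1/2" unfolding fP0 fPp TT_pm_pm \<alpha>_def .
  hence na: "\<alpha> * cnj \<alpha> = 1/2" by (metis complex_norm_square of_real_divide of_real_1 of_real_numeral)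
  have "TT (\<Phi> P1) (\<Phi> Pp) = TT P1 Pp" using C P1_pure Pp_pure by blast
  also have "TT P1 Pp = 1/2" unfolding P1_hm Pp_hm TT_hm_hm by simp
  finally have "(cmod \<beta>)^2 = 1/2" unfolding fP1 fPp TT_pm_pm \<beta>_def .
  hence nbt: "\<beta> * cnj \<beta> = 1/2" by (metis complex_norm_square of_real_divide of_real_1 of_real_numeral)
  define u where "u = 2 * sq * \<alpha>"
  define w where "w = 2 * sq * \<beta>"
  have nu: "u * cnj u = 1"
  proof -
    have "u * cnj u = 4 * (sq * sq) * (\<alpha> * cnj \<alpha>)" by (simp add: u_def sq_sq(2) algebra_simps)
    thus ?thesis by (simp add: sq_sq na)
  qed
  have nw: "w * cnj w = 1"
  proof -
    have "w * cnj w = 4 * (sq * sq) * (\<beta> * cnj \<beta>)" by (simp add: w_def sq_sq(2) algebra_simps)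
    thus ?thesis by (simp add: sq_sq nbt)
  qed
  have xi: "sq * (u * vf c0 c1 i + w * vf b0 b1 i) = vf x0 x1 i" if "i < 2" for i
  proof -
    have "sq * (u * vf c0 c1 i + w * vf b0 b1 i) = 2 * (sq * sq) * (\<alpha> * vf c0 c1 i + \<beta> * vf b0 b1 i)"
      by (simp add: u_def w_def algebra_simps)
    also have "\<dots> = \<alpha> * vf c0 c1 i + \<beta> * vf b0 b1 i" by (simp add: sq_sq)
    also have "\<dots> = (vf c0 c1 i * cnj (vf c0 c1 0) + vf b0 b1 i * cnj (vf b0 b1 0)) * x0
                  + (vf c0 c1 i * cnj (vf c0 c1 1) + vf b0 b1 i * cnj (vf b0 b1 1)) * x1"
      by (simp add: \<alpha>_def \<beta>_def vf_def algebra_simps)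
    also have "\<dots> = vf x0 x1 i"
      using completeness[OF nc nb orth that, of 0] completeness[OF nc nb orth that, of 1] that
      by (auto simp: vf_def)
    finally show ?thesis .
  qed
  define V where "V = mat 2 2 (\<lambda>(i,j). if j = 0 then u * vf c0 c1 i else w * vf b0 b1 i)"
  note VC = V_construct[OF nc nb orth nu nw, folded V_def]
  have U: "unitary2 V" using VC(1) .
  have VP0: "unitary_conj V P0 = \<Phi> P0" using VC(2) fP0 by simp
  have VP1: "unitary_conj V P1 = \<Phi> P1" using VC(3) fP1 by simp
  have VPp: "unitary_conj V Pp = \<Phi> Pp"
  proof -
    have "pm (sq * (u*c0 + w*b0)) (sq * (u*c1 + w*b1)) = pm x0 x1"
      using xi[of 0] xi[of 1] by (simp add: vf_def)
    thus ?thesis using VC(4) fPp by simp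
  qed
  define \<Psi> where "\<Psi> \<rho> = unitary_conj (adj V) (\<Phi> \<rho>)" for \<rho>
  have U': "unitary2 (adj V)" using unitary_adj[OF U] .
  have bk: "unitary_conj V (unitary_conj (adj V) X) = X" if "X \<in> carrier_mat 2 2" for X
    using uconj_back[OF U' that] by (simp add: adj_adj)
  have Ps: "\<Psi> \<rho> \<in> states2" if "\<rho> \<in> states2" for \<rho>
    unfolding \<Psi>_def using states_uconj[OF U'] H1 that by blast
  have PT: "TT (\<Psi> \<rho>) (\<Psi> \<sigma>) = TT \<rho> \<sigma>" if "\<rho> \<in> states2" "\<sigma> \<in> pure2" for \<rho> \<sigma>
  proof -
    have "TT (\<Psi> \<rho>) (\<Psi> \<sigma>) = TT (\<Phi> \<rho>) (\<Phi> \<sigma>)" unfolding \<Psi>_def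
      by (rule TT_uconj[OF U']) (use H1 that pure_state states_carrier in blast)+
    thus ?thesis using F[OF that] by simp
  qed
  have PsP0: "\<Psi> P0 = P0" unfolding \<Psi>_def VP0[symmetric] by (rule uconj_back[OF U]) (simp add: P0_def)
  have PsPp: "\<Psi> Pp = Pp" unfolding \<Psi>_def VPp[symmetric] by (rule uconj_back[OF U]) (simp add: Pp_def)
  obtain pz zz where zeta: "\<Psi> Pi = hm pz zz" using state_hm[OF Ps[OF pure_state[OF Pi_pure]]] .
  have "pz = TT (\<Psi> Pi) (\<Psi> P0)" unfolding zeta PsP0 TT_hm_P0 ..
  also have "\<dots> = TT Pi P0" by (rule PT[OF pure_state[OF Pi_pure] P0_pure])
  also have "\<dots> = 1/2" unfolding Pi_hm P0_hm TT_hm_hm by simp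
  finally have pz: "pz = 1/2" .
  have "1/2 + Re zz = TT (\<Psi> Pi) (\<Psi> Pp)" unfolding zeta PsPp TT_hm_Pp ..
  also have "\<dots> = TT Pi Pp" by (rule PT[OF pure_state[OF Pi_pure] Pp_pure])
  also have "\<dots> = 1/2" unfolding Pi_hm Pp_hm TT_hm_hm by simp
  finally have rezz: "Re zz = 0" by simp
  have "TT (\<Psi> Pi) (\<Psi> Pi) = TT Pi Pi" by (rule PT[OF pure_state[OF Pi_pure] Pi_pure])
  also have "\<dots> = 1" by (rule pure_TT_self[OF Pi_pure])
  finally have "pz*pz + (1-pz)*(1-pz) + 2 * (Re zz * Re zz + Im zz * Im zz) = 1"
    unfolding zeta TT_hm_hm .
  hence "Im zz * Im zz = 1/4" using pz rezz by simp
  hence "(Im zz - 1/2) * (Im zz + 1/2) = 0" by (simp add: algebra_simps)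
  hence izz: "Im zz = 1/2 \<or> Im zz = -1/2" by auto
  have J: "\<exists>p z p' z'. \<rho> = hm p z \<and> \<Psi> \<rho> = hm p' z' \<and> p' = p \<and> Re z' = Re z \<and> 1/2 + 2 * Im z' * Im zz = 1/2 - Im z"
    if r: "\<rho> \<in> states2" for \<rho>
  proof -
    obtain p z where rz: "\<rho> = hm p z" using state_hm[OF r] .
    obtain p' z' where pz': "\<Psi> \<rho> = hm p' z'" using state_hm[OF Ps[OF r]] .
    have "p' = TT (\<Psi> \<rho>) (\<Psi> P0)" unfolding pz' PsP0 TT_hm_P0 ..
    also have "\<dots> = TT \<rho> P0" by (rule PT[OF r P0_pure])
    finally have e1: "p' = p" unfolding rz TT_hm_P0 .
    have "1/2 + Re z' = TT (\<Psi> \<rho>) (\<Psi> Pp)" unfolding pz' PsPp TT_hm_Pp ..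
    also have "\<dots> = TT \<rho> Pp" by (rule PT[OF r Pp_pure])
    finally have e2: "Re z' = Re z" unfolding rz TT_hm_Pp by simp
    have "TT (\<Psi> \<rho>) (\<Psi> Pi) = TT \<rho> Pi" by (rule PT[OF r Pi_pure])
    hence "p'*pz + (1-p')*(1-pz) + 2 * (Re z' * Re zz + Im z' * Im zz) = 1/2 - Im z"
      unfolding pz' zeta unfolding rz TT_hm_hm TT_hm_Pi .
    moreover have "p'*pz + (1-p')*(1-pz) = 1/2" using pz by (simp add: field_simps)
    ultimately have "1/2 + 2 * (Im z' * Im zz) = 1/2 - Im z" using rezz by simp
    hence e3: "1/2 + 2 * Im z' * Im zz = 1/2 - Im z" by (simp add: mult.assoc)
    show ?thesis using rz pz' e1 e2 e3 by blast
  qed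
  have recon: "\<Phi> \<rho> = unitary_conj V (\<Psi> \<rho>)" if "\<rho> \<in> states2" for \<rho>
  proof -
    have "\<Phi> \<rho> \<in> carrier_mat 2 2" using H1 that states_carrier by blast
    thus ?thesis unfolding \<Psi>_def by (rule bk[symmetric])
  qed
  from izz show ?thesis
  proof
    assume i: "Im zz = 1/2"
    have "\<forall>\<rho> \<in> states2. \<Phi> \<rho> = antiunitary_conj V \<rho>"
    proof
      fix \<rho> assume r: "\<rho> \<in> states2"
      obtain p z p' z' where *: "\<rho> = hm p z" "\<Psi> \<rho> = hm p' z'" "p' = p" "Re z' = Re z"
          "1/2 + 2 * Im z' * Im zz = 1/2 - Im z" using J[OF r] by blast
      have "z' = cnj z" using *(4,5) i by (simp add: complex_eq_iff)
      hence "\<Psi> \<rho> = cconj \<rho>" using * by (simp add: cconj_hm)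
      thus "\<Phi> \<rho> = antiunitary_conj V \<rho>" using recon[OF r]
        by (simp add: antiunitary_conj_def unitary_conj_def)
    qed
    thus ?thesis using U by blast
  next
    assume i: "Im zz = -1/2"
    have "\<forall>\<rho> \<in> states2. \<Phi> \<rho> = unitary_conj V \<rho>"
    proof
      fix \<rho> assume r: "\<rho> \<in> states2"
      obtain p z p' z' where *: "\<rho> = hm p z" "\<Psi> \<rho> = hm p' z'" "p' = p" "Re z' = Re z"
          "1/2 + 2 * Im z' * Im zz = 1/2 - Im z" using J[OF r] by blast
      have "z' = z" using *(4,5) i by (simp add: complex_eq_iff)
      hence "\<Psi> \<rho> = \<rho>" using * by simp
      thus "\<Phi> \<rho> = unitary_conj V \<rho>" using recon[OF r] by simp
    qed
    thus ?thesis using U by blast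
  qed
qed


theorem theorem2p1:
  shows "(\<forall>\<Phi> :: complex mat \<Rightarrow> complex mat.
            (\<forall>\<rho> \<in> states2. \<Phi> \<rho> \<in> states2) \<and>
            (\<forall>\<rho> \<in> states2. \<forall>\<omega> \<in> states2. d_sym (\<Phi> \<rho>) (\<Phi> \<omega>) = d_sym \<rho> \<omega>) \<and>
            (\<forall>\<rho> \<in> pure2. \<Phi> \<rho> \<in> pure2)
          \<longrightarrow> (\<exists>V. unitary2 V \<and>
                 ((\<forall>\<rho> \<in> states2. \<Phi> \<rho> = unitary_conj V \<rho>) \<or>
                  (\<forall>\<rho> \<in> states2. \<Phi> \<rho> = antiunitary_conj V \<rho>))))
       \<and> (\<forall>V. unitary2 V \<longrightarrow>
            (\<forall>\<rho> \<in> states2. unitary_conj V \<rho> \<in> states2 \<and> antiunitary_conj V \<rho> \<in> states2) \<and>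
            (\<forall>\<rho> \<in> states2. \<forall>\<omega> \<in> states2.
               d_sym (unitary_conj V \<rho>) (unitary_conj V \<omega>) = d_sym \<rho> \<omega> \<and>
               d_sym (antiunitary_conj V \<rho>) (antiunitary_conj V \<omega>) = d_sym \<rho> \<omega>))"
proof (intro conjI allI impI ballI)
  fix \<Phi> :: "complex mat \<Rightarrow> complex mat"
  assume h: "(\<forall>\<rho> \<in> states2. \<Phi> \<rho> \<in> states2) \<and>
            (\<forall>\<rho> \<in> states2. \<forall>\<omega> \<in> states2. d_sym (\<Phi> \<rho>) (\<Phi> \<omega>) = d_sym \<rho> \<omega>) \<and>
            (\<forall>\<rho> \<in> pure2. \<Phi> \<rho> \<in> pure2)"
  show "\<exists>V. unitary2 V \<and>
                 ((\<forall>\<rho> \<in> states2. \<Phi> \<rho> = unitary_conj V \<rho>) \<or>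
                  (\<forall>\<rho> \<in> states2. \<Phi> \<rho> = antiunitary_conj V \<rho>))"
    using forward h by blast
next
  fix V \<rho> assume "unitary2 V" "\<rho> \<in> states2"
  thus "unitary_conj V \<rho> \<in> states2" by (rule states_uconj)
next
  fix V \<rho> assume "unitary2 V" "\<rho> \<in> states2"
  thus "antiunitary_conj V \<rho> \<in> states2" by (rule states_aconj)
next
  fix V \<rho> \<omega> assume "unitary2 V" "\<rho> \<in> states2" "\<omega> \<in> states2"
  thus "d_sym (unitary_conj V \<rho>) (unitary_conj V \<omega>) = d_sym \<rho> \<omega>"
    using dsym_uconj states_carrier by blast
next
  fix V \<rho> \<omega> assume "unitary2 V" "\<rho> \<in> states2" "\<omega> \<in> states2"
  thus "d_sym (antiunitary_conj V \<rho>) (antiunitary_conj V \<omega>) = d_sym \<rho> \<omega>"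
    using dsym_aconj states_carrier by blast
qed

end
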